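(* Let $X$ be a nonempty countable set, $\mathcal D$ a distribution on $X$, $\rho$ a cost function on $X$ of finite degree $d\ge1$, and $m,n,k_{\max}\ge1$ integers with $n+k_{\max}\le m/2$. Let $\mu\in\mathscr D^{m,\rho,\mathcal D}_{\mathrm{adaptive}}$. Then there is an integer $k$ with $0\le k\le k_{\max}$ such that $$\mathbb E_{(S,c)\sim\mathrm{Grouped}_{n,k}(\mu)}\Big[d_{\mathrm{TV}}\big(\mathrm{Group}_n(\mu,c),\ \mathcal D_{\mathrm{goal}}(c)^n\big)\Big]\le\sqrt{\frac{n^2\ln d}{2k_{\max}}}.$$
   Context: All distributions are discrete. A cost function on $X$ is $\rho:X\times X\to\mathbb R_{\ge0}\cup\{\infty\}$ with $\rho(x,x)=0$; its degree is $\sup_x\#\{y:\rho(x,y)\ne\infty\}$. For $S\in X^m$, $\mathcal C_\rho(S)=\{S'\in X^m:\frac1m\sum_i\rho(S_i,S'_i)\le1\}$. $\mathscr D^{m,\rho,\mathcal D}_{\mathrm{adaptive}}$ is the set of distributions $\mu$ on $X^m$ for which there is a coupling of $S'\sim\mu$ and $S\sim\mathcal D^m$ with $S'\in\mathcal C_\rho(S)$ almost surely. $\mathrm{Grouped}_{n,k}(\mu)$ is the joint distribution of $(S,c)\in X^n\times X^k$ obtained by drawing $S_{\mathrm{big}}\sim\mu$, drawing a uniformly random sequence $(i_1,\dots,i_{n+k})$ of distinct indices of $[m]$, and setting $S=(S_{\mathrm{big},i_1},\dots,S_{\mathrm{big},i_n})$, $c=(S_{\mathrm{big},i_{n+1}},\dots,S_{\mathrm{big},i_{n+k}})$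 (the "core"). $\mathrm{Group}_n(\mu,c)$ is the conditional distribution of $S$ given $c$. $\mathcal D_{\mathrm{goal}}(c)$ is the distribution on $X$ of a uniformly random coordinate of $S\sim\mathrm{Group}_n(\mu,c)$, i.e. $\mathbb E_{S\sim\mathrm{Group}_n(\mu,c)}[\mathrm{Unif}(S)]$. $d_{\mathrm{TV}}$ is total variation distance. *)

theory Defs
  imports "HOL-Probability.Probability"
begin

definition is_cost :: "('a \<Rightarrow> 'a \<Rightarrow> ennreal) \<Rightarrow> bool" where
  "is_cost \<rho> \<longleftrightarrow> (\<forall>x. \<rho> x x = 0)"

definition cost_degree :: "('a \<Rightarrow> 'a \<Rightarrow> ennreal) \<Rightarrow> enat" where
  "cost_degree \<rho> = (SUP x. (if finite {y. \<rho> x y \<noteq> \<infinity>} then enat (card {y. \<rho> x y \<noteq> \<infinity>}) else \<infinity>))"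

definition cost_ball :: "('a \<Rightarrow> 'a \<Rightarrow> ennreal) \<Rightarrow> 'a list \<Rightarrow> 'a list set" where
  "cost_ball \<rho> S = {S'. length S' = length S \<and>
      (\<Sum>i<length S. \<rho> (S ! i) (S' ! i)) / of_nat (length S) \<le> 1}"

definition adaptive :: "nat \<Rightarrow> ('a \<Rightarrow> 'a \<Rightarrow> ennreal) \<Rightarrow> 'a pmf \<Rightarrow> 'a list pmf set" where
  "adaptive m \<rho> D = {\<mu>. \<exists>\<nu> :: ('a list \<times> 'a list) pmf.
      map_pmf fst \<nu> = \<mu> \<and> map_pmf snd \<nu> = replicate_pmf m D \<and>
      (\<forall>(S', S) \<in> set_pmf \<nu>. S' \<in> cost_ball \<rho> S)}"

text \<open>Grouped_{n,k}(mu); m is the common length of the samples drawn from mu.\<close>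
definition grouped :: "nat \<Rightarrow> nat \<Rightarrow> nat \<Rightarrow> 'a list pmf \<Rightarrow> ('a list \<times> 'a list) pmf" where
  "grouped m n k \<mu> = do {
      Sbig \<leftarrow> \<mu>;
      is \<leftarrow> pmf_of_set {is. distinct is \<and> length is = n + k \<and> set is \<subseteq> {..<m}};
      return_pmf (map (\<lambda>i. Sbig ! i) (take n is), map (\<lambda>i. Sbig ! i) (drop n is))
   }"

definition group :: "nat \<Rightarrow> nat \<Rightarrow> 'a list pmf \<Rightarrow> 'a list \<Rightarrow> 'a list pmf" where
  "group m n \<mu> c = map_pmf fst (cond_pmf (grouped m n (length c) \<mu>) {p. snd p = c})"

definition D_goal :: "nat \<Rightarrow> nat \<Rightarrow> 'a list pmf \<Rightarrow> 'a list \<Rightarrow> 'a pmf" where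
  "D_goal m n \<mu> c = do { S \<leftarrow> group m n \<mu> c; i \<leftarrow> pmf_of_set {..<length S}; return_pmf (S ! i) }"

definition tv_dist :: "'a pmf \<Rightarrow> 'a pmf \<Rightarrow> real" where
  "tv_dist p q = (SUP A. \<bar>measure_pmf.prob p A - measure_pmf.prob q A\<bar>)"

end

theory Submission
  imports Defs
begin



lemma kl_split:
  fixes a b :: real assumes "0 \<le> a" "a \<le> 1" "0 < b" "b < 1"
  shows "a * ln (a/b) + (1-a) * ln ((1-a)/(1-b)) =
         (a * ln a + (1-a) * ln (1-a)) + (- a * ln b - (1-a) * ln (1-b))"
proof -
  have 1: "a * ln (a/b) = a * ln a - a * ln b"
    using assms by (cases "a = 0") (auto simp: ln_div algebra_simps)
  have 2: "(1-a) * ln ((1-a)/(1-b)) = (1-a) * ln (1-a) - (1-a) * ln (1-b)"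
    using assms by (cases "a = 1") (auto simp: ln_div algebra_simps)
  show ?thesis using 1 2 by simp
qed

lemma deriv_G:
  fixes a x :: real assumes "0 < x" "x < 1"
  shows "((\<lambda>x. - a * ln x - (1-a) * ln (1-x) - 2*(a-x)^2) has_real_derivative
          (-a/x + (1-a)/(1-x) + 4*(a-x))) (at x)"
proof -
  have "((\<lambda>x. - a * ln x - (1-a) * ln (1-x) - 2*(a-x)^2) has_real_derivative
          (- a * (1/x) - (1-a) * ((-1)/(1-x)) - 2*(2*(a-x)*(-1)))) (at x)"
    using assms by (auto intro!: derivative_eq_intros simp: power2_eq_square)
  moreover have "- a * (1/x) - (1-a) * ((-1)/(1-x)) - 2*(2*(a-x)*(-1)) = -a/x + (1-a)/(1-x) + 4*(a-x)"
    by (simp add: algebra_simps)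
  ultimately show ?thesis by (rule DERIV_cong)
qed

lemma G_deriv_sign:
  fixes a x :: real assumes "0 < x" "x < 1"
  shows "-a/x + (1-a)/(1-x) + 4*(a-x) = (x - a) * (1/(x*(1-x)) - 4)"
proof -
  have p: "x \<noteq> 0" "1 - x \<noteq> 0" using assms by auto
  have "(x - a) * (1/(x*(1-x)) - 4) = (x - a)/(x*(1-x)) - 4*(x-a)" by (simp add: algebra_simps)
  also have "(x - a)/(x*(1-x)) = -a/x + (1-a)/(1-x)"
    using p by (simp add: field_simps)
  finally show ?thesis by simp
qed

lemma x1x: fixes x :: real shows "x*(1-x) \<le> 1/4"
  using sum_power2_ge_zero[of "x - 1/2" 0] by (simp add: power2_eq_square algebra_simps)

lemma inv_ge4: fixes x :: real assumes "0 < x" "x < 1" shows "1/(x*(1-x)) - 4 \<ge> 0"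
proof -
  have p: "0 < x*(1-x)" using assms by simp
  have "4 \<le> 1/(x*(1-x))" using x1x[of x] p by (simp add: field_simps)
  thus ?thesis by simp
qed

lemma binary_pinsker:
  fixes a b :: real
  assumes a: "0 \<le> a" "a \<le> 1" and b: "0 \<le> b" "b \<le> 1"
    and ac1: "a > 0 \<Longrightarrow> b > 0" and ac2: "a < 1 \<Longrightarrow> b < 1"
  shows "2 * (a-b)^2 \<le> a * ln (a/b) + (1-a) * ln ((1-a)/(1-b))"
proof -
  consider "b = 0" | "b = 1" | "0 < b \<and> b < 1" using b by linarith
  then show ?thesis
  proof cases
    case 1 then have "a = 0" using ac1 a by force
    then show ?thesis using 1 by simp
  next
    case 2 then have "a = 1" using ac2 a by force
    then show ?thesis using 2 by simp
  next
    case 3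
    define G where "G = (\<lambda>x::real. - a * ln x - (1-a) * ln (1-x) - 2*(a-x)^2)"
    have key: "G a \<le> G b"
    proof (cases "a \<le> b")
      case True
      have cont: "continuous_on {a..b} G"
      proof (cases "a = 0")
        case True
        have "continuous_on {a..b} (\<lambda>x::real. - (1-a) * ln (1-x) - 2*(a-x)^2)"
          using 3 \<open>a\<le>b\<close> by (auto intro!: continuous_intros)
        thus ?thesis using True by (simp add: G_def)
      next
        case False
        thus ?thesis unfolding G_def using 3 \<open>a\<le>b\<close> a by (auto intro!: continuous_intros)
      qed
      show ?thesis
      proof (rule DERIV_nonneg_imp_increasing_open[OF True _ cont])
        fix x assume x: "a < x" "x < b"
        then have x01: "0 < x" "x < 1" using a 3 by auto
        show "\<exists>y. DERIV G x :> y \<and> 0 \<le> y"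
          unfolding G_def
          using deriv_G[OF x01, of a] G_deriv_sign[OF x01, of a] inv_ge4[OF x01] x
          by (intro exI[of _ "-a/x + (1-a)/(1-x) + 4*(a-x)"]) auto
      qed
    next
      case False
      have cont: "continuous_on {b..a} G"
      proof (cases "a = 1")
        case True
        have "continuous_on {b..a} (\<lambda>x::real. - a * ln x - 2*(a-x)^2)"
          using 3 False by (auto intro!: continuous_intros)
        thus ?thesis using True by (simp add: G_def)
      next
        case F: False
        thus ?thesis unfolding G_def using 3 False a by (auto intro!: continuous_intros)
      qed
      show ?thesis
      proof (rule DERIV_nonpos_imp_decreasing_open[of b a G, OF _ _ cont])
        show "b \<le> a" using False by simp
        fix x assume x: "b < x" "x < a"
        then have x01: "0 < x" "x < 1" using a 3 by auto
        have "(x - a) * (1/(x*(1-x)) - 4) \<le> 0"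
          using inv_ge4[OF x01] x by (intro mult_nonpos_nonneg) auto
        then show "\<exists>y. DERIV G x :> y \<and> y \<le> 0"
          unfolding G_def
          using deriv_G[OF x01, of a] G_deriv_sign[OF x01, of a]
          by (intro exI[of _ "-a/x + (1-a)/(1-x) + 4*(a-x)"]) auto
      qed
    qed
    have e0: "(a * ln a + (1-a) * ln (1-a)) + G a = 0"
      unfolding G_def by simp
    have "a * ln (a/b) + (1-a) * ln ((1-a)/(1-b)) = (a * ln a + (1-a) * ln (1-a)) + G b + 2*(a-b)^2"
      using kl_split[OF a, of b] 3 unfolding G_def by simp
    then show ?thesis using key e0 by linarith
  qed
qed

lemma sqrt_le_am:
  fixes y t :: real assumes "0 \<le> y" "0 < t"
  shows "sqrt y \<le> (y + t^2) / (2*t)"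
proof -
  have "2 * t * sqrt y \<le> y + t^2"
    using sum_power2_ge_zero[of "sqrt y - t" 0] assms
    by (simp add: power2_eq_square algebra_simps)
  thus ?thesis using assms by (simp add: field_simps)
qed




lemma ln_ge_1_minus_inv: fixes y :: real assumes "0 < y" shows "1 - 1/y \<le> ln y"
proof -
  have "ln (1/y) \<le> 1/y - 1" using assms by (intro ln_le_minus_one) auto
  thus ?thesis using assms by (simp add: ln_div)
qed

lemma int_ind: fixes f :: "'a \<Rightarrow> real"
  assumes "integrable (measure_pmf p) f" shows "integrable (measure_pmf p) (\<lambda>x. indicator A x * f x)"
  using integrable_mult_indicator[of A "measure_pmf p" f] assms by simp

lemma pmf_compl: "measure (measure_pmf p) (-A) = 1 - measure (measure_pmf p) A"
  using measure_pmf.prob_compl[of A p] by (simp add: Compl_eq_Diff_UNIV)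

lemma logsum_pmf:
  fixes p q :: "'a pmf" and A :: "'a set"
  assumes pos: "\<And>x. x \<in> set_pmf p \<Longrightarrow> pmf q x > 0"
    and int: "integrable p (\<lambda>x. ln (pmf p x / pmf q x))"
  shows "measure p A * ln (measure p A / measure q A) \<le> (\<integral>x. indicator A x * ln (pmf p x / pmf q x) \<partial>p)"
    and "measure p A > 0 \<Longrightarrow> measure q A > 0"
proof -
  define a where "a = measure p A"
  define b where "b = measure q A"
  define l where "l = (\<lambda>x. ln (pmf p x / pmf q x))"
  have intA: "integrable p (\<lambda>x. indicator A x * l x)"
    using int unfolding l_def by (intro int_ind) auto
  show bpos: "measure p A > 0 \<Longrightarrow> measure q A > 0"
  proof -
    assume "measure p A > 0"
    then obtain x0 where x0: "x0 \<in> set_pmf p" "x0 \<in> A"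
      using measure_pmf_zero_iff[of p A] by auto
    have "pmf q x0 \<le> measure q A"
      using x0 by (simp add: measure_pmf_single[symmetric] measure_pmf.finite_measure_mono)
    thus "measure q A > 0" using pos[OF x0(1)] by simp
  qed
  show "measure p A * ln (measure p A / measure q A) \<le> (\<integral>x. indicator A x * ln (pmf p x / pmf q x) \<partial>p)"
  proof (cases "a = 0")
    case True
    have "AE x in p. indicator A x * l x = 0"
    proof -
      have "\<forall>x\<in>set_pmf p. indicator A x * l x = 0"
      proof
        fix x assume x: "x \<in> set_pmf p"
        show "indicator A x * l x = 0"
        proof (cases "x \<in> A")
          case True
          then have "measure p A > 0" using measure_pmf_posI[OF x] by blast
          then show ?thesis using \<open>a = 0\<close> a_def by simp
        qed simp
      qed
      thus ?thesis by (simp add: AE_measure_pmf_iff)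
    qed
    note AE0 = this
    have "(\<integral>x. indicator A x * l x \<partial>p) = 0" by (rule integral_eq_zero_AE[OF AE0])
    then show ?thesis using True unfolding a_def l_def by simp
  next
    case False
    then have apos: "a > 0" unfolding a_def by (simp add: zero_less_measure_iff)
    then have bp: "b > 0" unfolding a_def b_def using bpos by simp
    define u where "u = (\<lambda>x. indicator A x * (pmf q x / pmf p x))"
    have u_nn: "(\<integral>\<^sup>+x. ennreal (u x) \<partial>p) \<le> ennreal b"
    proof -
      have "(\<integral>\<^sup>+x. ennreal (u x) \<partial>p) = (\<integral>\<^sup>+x. ennreal (pmf p x) * ennreal (u x) \<partial>count_space UNIV)"
        by (simp add: nn_integral_measure_pmf)
      also have "\<dots> \<le> (\<integral>\<^sup>+x. ennreal (pmf q x) * indicator A x \<partial>count_space UNIV)"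
      proof (intro nn_integral_mono)
        fix x
        show "ennreal (pmf p x) * ennreal (u x) \<le> ennreal (pmf q x) * indicator A x"
        proof (cases "pmf p x = 0")
          case True then show ?thesis by simp
        next
          case False
          show ?thesis
          proof (cases "x \<in> A")
            case True
            have "pmf p x * u x = pmf q x" unfolding u_def using True False by simp
            moreover have "ennreal (pmf p x) * ennreal (u x) = ennreal (pmf p x * u x)"
              by (rule ennreal_mult[symmetric]) (auto simp: u_def)
            ultimately show ?thesis using True by simp
          next
            case F: False
            then show ?thesis unfolding u_def by simp
          qed
        qed
      qed
      also have "\<dots> = emeasure q A"
        by (simp add: nn_integral_measure_pmf[symmetric] nn_integral_indicator)
      also have "\<dots> = ennreal b" unfolding b_def by (simp add: measure_pmf.emeasure_eq_measure)
      finally show ?thesis .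
    qed
    have u_ge: "\<And>x. 0 \<le> u x" unfolding u_def by simp
    have u_int: "integrable p u"
      using u_nn u_ge by (intro integrableI_nonneg) (auto simp: top_unique intro: le_less_trans)
    have u_le: "(\<integral>x. u x \<partial>p) \<le> b"
    proof -
      have "(\<integral>x. u x \<partial>p) = enn2real (\<integral>\<^sup>+x. ennreal (u x) \<partial>p)"
        using u_ge by (intro integral_eq_nn_integral) auto
      also have "\<dots> \<le> enn2real (ennreal b)"
        using u_nn by (intro enn2real_mono) auto
      finally show ?thesis using bp by simp
    qed
    have pw: "AE x in p. indicator A x * (ln (a/b) + 1) - (a/b) * u x \<le> indicator A x * l x"
    proof -
      have "\<forall>x\<in>set_pmf p. indicator A x * (ln (a/b) + 1) - (a/b) * u x \<le> indicator A x * l x"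
      proof
        fix x assume x: "x \<in> set_pmf p"
        have px: "pmf p x > 0" using x by (simp add: pmf_positive)
        have qx: "pmf q x > 0" using pos[OF x] .
        show "indicator A x * (ln (a/b) + 1) - (a/b) * u x \<le> indicator A x * l x"
        proof (cases "x \<in> A")
          case True
          define y where "y = (pmf p x * b) / (pmf q x * a)"
          have ypos: "y > 0" unfolding y_def using px qx apos bp by simp
          have "1 - 1/y \<le> ln y" by (rule ln_ge_1_minus_inv[OF ypos])
          moreover have "ln y = l x - ln (a/b)"
            unfolding y_def l_def using px qx apos bp by (simp add: ln_div ln_mult)
          moreover have "1/y = (a/b) * (pmf q x / pmf p x)"
            unfolding y_def using px qx apos bp by (simp add: field_simps)
          ultimately show ?thesis using True unfolding u_def by simp
        qed (simp add: u_def)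
      qed
      thus ?thesis by (simp add: AE_measure_pmf_iff)
    qed
    have intI: "integrable p (indicator A :: _ \<Rightarrow> real)"
      by (rule measure_pmf.integrable_const_bound[where B=1]) (auto simp: indicator_def)
    have i1: "integrable p (\<lambda>x. indicator A x * (ln (a/b) + 1) - (a/b) * u x)"
      using u_int by (intro Bochner_Integration.integrable_diff int_ind) auto
    have "(\<integral>x. indicator A x * (ln (a/b) + 1) - (a/b) * u x \<partial>p) \<le> (\<integral>x. indicator A x * l x \<partial>p)"
      by (rule integral_mono_AE[OF i1 intA pw])
    moreover have "(\<integral>x. indicator A x * (ln (a/b) + 1) - (a/b) * u x \<partial>p) = a * (ln (a/b) + 1) - (a/b) * (\<integral>x. u x \<partial>p)"
      using u_int intI unfolding a_def
      by (subst Bochner_Integration.integral_diff) (auto intro!: int_ind)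
    moreover have "(a/b) * (\<integral>x. u x \<partial>p) \<le> (a/b) * b"
      using u_le apos bp by (intro mult_left_mono) auto
    ultimately show ?thesis using bp unfolding a_def b_def l_def by (simp add: algebra_simps)
  qed
qed

lemma gibbs_pmf:
  fixes p q :: "'a pmf"
  assumes pos: "\<And>x. x \<in> set_pmf p \<Longrightarrow> pmf q x > 0"
    and int: "integrable p (\<lambda>x. ln (pmf p x / pmf q x))"
  shows "0 \<le> (\<integral>x. ln (pmf p x / pmf q x) \<partial>p)"
  using logsum_pmf(1)[OF pos int, of UNIV] by simp

lemma pinsker_pmf:
  fixes p q :: "'a pmf"
  assumes pos: "\<And>x. x \<in> set_pmf p \<Longrightarrow> pmf q x > 0"
    and int: "integrable p (\<lambda>x. ln (pmf p x / pmf q x))"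
  shows "tv_dist p q \<le> sqrt ((\<integral>x. ln (pmf p x / pmf q x) \<partial>p) / 2)"
  unfolding tv_dist_def
proof (rule cSUP_least)
  fix A
  define l where "l = (\<lambda>x. ln (pmf p x / pmf q x))"
  define a where "a = measure p A"
  define b where "b = measure q A"
  have c1: "measure p (-A) = 1 - a" unfolding a_def by (simp add: pmf_compl)
  have c2: "measure q (-A) = 1 - b" unfolding b_def by (simp add: pmf_compl)
  have L1: "a * ln (a/b) \<le> (\<integral>x. indicator A x * l x \<partial>p)"
    using logsum_pmf(1)[OF pos int, of A] unfolding a_def b_def l_def .
  have L2: "(1-a) * ln ((1-a)/(1-b)) \<le> (\<integral>x. indicator (-A) x * l x \<partial>p)"
    using logsum_pmf(1)[OF pos int, of "-A"] c1 c2 unfolding l_def by simp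
  have sum: "(\<integral>x. l x \<partial>p) = (\<integral>x. indicator A x * l x \<partial>p) + (\<integral>x. indicator (-A) x * l x \<partial>p)"
  proof -
    have "(\<lambda>x. l x) = (\<lambda>x. indicator A x * l x + indicator (-A) x * l x)"
      by (auto simp: indicator_def fun_eq_iff)
    then show ?thesis using int unfolding l_def
      by (simp add: Bochner_Integration.integral_add int_ind)
  qed
  have ab: "0 \<le> a" "a \<le> 1" "0 \<le> b" "b \<le> 1" unfolding a_def b_def by auto
  have ac1: "a > 0 \<Longrightarrow> b > 0" using logsum_pmf(2)[OF pos int, of A] unfolding a_def b_def by simp
  have ac2: "a < 1 \<Longrightarrow> b < 1" using logsum_pmf(2)[OF pos int, of "-A"] c1 c2 by simp
  have "2 * (a-b)^2 \<le> (\<integral>x. l x \<partial>p)"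
    using binary_pinsker[OF ab ac1 ac2] L1 L2 sum by linarith
  then have "(a-b)^2 \<le> (\<integral>x. l x \<partial>p) / 2" by simp
  then have "sqrt ((a-b)^2) \<le> sqrt ((\<integral>x. l x \<partial>p) / 2)" by (rule real_sqrt_le_mono)
  then show "\<bar>measure_pmf.prob p A - measure_pmf.prob q A\<bar> \<le> sqrt ((\<integral>x. ln (pmf p x / pmf q x) \<partial>p) / 2)"
    unfolding a_def b_def l_def by simp
qed simp




lemma nn_point_le:
  fixes g :: "'a \<Rightarrow> ennreal"
  shows "ennreal (pmf p x) * g x \<le> (\<integral>\<^sup>+y. g y \<partial>measure_pmf p)"
proof -
  have "(\<integral>\<^sup>+y. g x * indicator {x} y \<partial>measure_pmf p) \<le> (\<integral>\<^sup>+y. g y \<partial>measure_pmf p)"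
    by (intro nn_integral_mono) (auto simp: indicator_def)
  moreover have "(\<integral>\<^sup>+y. g x * indicator {x} y \<partial>measure_pmf p) = g x * emeasure p {x}"
    by (rule nn_integral_cmult_indicator) simp
  ultimately show ?thesis by (simp add: emeasure_pmf_single mult.commute)
qed

lemma tower_int:
  fixes f :: "'b \<Rightarrow> real"
  assumes int: "integrable (measure_pmf (bind_pmf p K)) f" and x: "x \<in> set_pmf p"
  shows "integrable (measure_pmf (K x)) f"
proof -
  have fin: "(\<integral>\<^sup>+y. ennreal (norm (f y)) \<partial>bind_pmf p K) < \<infinity>"
    using int by (simp add: integrable_iff_bounded)
  have "ennreal (pmf p x) * (\<integral>\<^sup>+y. ennreal (norm (f y)) \<partial>K x) \<le> (\<integral>\<^sup>+y. ennreal (norm (f y)) \<partial>bind_pmf p K)"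
    using nn_point_le[of p x "\<lambda>x. (\<integral>\<^sup>+y. ennreal (norm (f y)) \<partial>K x)"] by simp
  then have "ennreal (pmf p x) * (\<integral>\<^sup>+y. ennreal (norm (f y)) \<partial>K x) < \<infinity>"
    using fin by (rule le_less_trans)
  moreover have "pmf p x > 0" using x by (simp add: pmf_positive)
  ultimately have "(\<integral>\<^sup>+y. ennreal (norm (f y)) \<partial>K x) < \<infinity>"
    by (force simp: ennreal_mult_less_top)
  then show ?thesis by (simp add: integrable_iff_bounded)
qed

lemma tower_nn:
  fixes f :: "'b \<Rightarrow> real"
  assumes int: "integrable (measure_pmf (bind_pmf p K)) f" and nn: "\<And>y. 0 \<le> f y"
  shows "integrable (measure_pmf p) (\<lambda>x. \<integral>y. f y \<partial>K x)"
    and "(\<integral>y. f y \<partial>bind_pmf p K) = (\<integral>x. (\<integral>y. f y \<partial>K x) \<partial>p)"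
proof -
  have e1: "(\<integral>\<^sup>+y. ennreal (f y) \<partial>bind_pmf p K) = (\<integral>\<^sup>+x. ennreal (\<integral>y. f y \<partial>K x) \<partial>p)"
  proof -
    have "(\<integral>\<^sup>+y. ennreal (f y) \<partial>bind_pmf p K) = (\<integral>\<^sup>+x. (\<integral>\<^sup>+y. ennreal (f y) \<partial>K x) \<partial>p)"
      by simp
    also have "\<dots> = (\<integral>\<^sup>+x. ennreal (\<integral>y. f y \<partial>K x) \<partial>p)"
    proof (rule nn_integral_cong_AE)
      show "AE x in measure_pmf p. (\<integral>\<^sup>+y. ennreal (f y) \<partial>K x) = ennreal (\<integral>y. f y \<partial>K x)"
        using tower_int[OF int] nn
        by (auto simp: AE_measure_pmf_iff intro!: nn_integral_eq_integral)
    qed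
    finally show ?thesis .
  qed
  have fin: "(\<integral>\<^sup>+y. ennreal (f y) \<partial>bind_pmf p K) < \<infinity>"
    using int nn by (simp add: integrable_iff_bounded)
  have nn2: "\<And>x. 0 \<le> (\<integral>y. f y \<partial>K x)" using nn by (simp add: integral_nonneg)
  show i: "integrable (measure_pmf p) (\<lambda>x. \<integral>y. f y \<partial>K x)"
    using fin e1 nn2 by (intro integrableI_nonneg) auto
  have "(\<integral>y. f y \<partial>bind_pmf p K) = enn2real (\<integral>\<^sup>+y. ennreal (f y) \<partial>bind_pmf p K)"
    using nn by (intro integral_eq_nn_integral) auto
  also have "\<dots> = enn2real (\<integral>\<^sup>+x. ennreal (\<integral>y. f y \<partial>K x) \<partial>p)" using e1 by simp
  also have "\<dots> = (\<integral>x. (\<integral>y. f y \<partial>K x) \<partial>p)"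
    using nn2 by (intro integral_eq_nn_integral[symmetric]) auto
  finally show "(\<integral>y. f y \<partial>bind_pmf p K) = (\<integral>x. (\<integral>y. f y \<partial>K x) \<partial>p)" .
qed

lemma tower_pmf:
  fixes f :: "'b \<Rightarrow> real"
  assumes int: "integrable (measure_pmf (bind_pmf p K)) f"
  shows "integrable (measure_pmf p) (\<lambda>x. \<integral>y. f y \<partial>K x)"
    and "(\<integral>y. f y \<partial>bind_pmf p K) = (\<integral>x. (\<integral>y. f y \<partial>K x) \<partial>p)"
proof -
  define fp where "fp = (\<lambda>y. max (f y) 0)"
  define fm where "fm = (\<lambda>y. max (- f y) 0)"
  have ip: "integrable (measure_pmf (bind_pmf p K)) fp" unfolding fp_def using int by auto
  have im: "integrable (measure_pmf (bind_pmf p K)) fm" unfolding fm_def using int by auto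
  have fdec: "\<And>y. f y = fp y - fm y" unfolding fp_def fm_def by auto
  note P = tower_nn[OF ip] and M = tower_nn[OF im]
  have inner: "AE x in measure_pmf p. (\<integral>y. f y \<partial>K x) = (\<integral>y. fp y \<partial>K x) - (\<integral>y. fm y \<partial>K x)"
  proof -
    have "\<forall>x\<in>set_pmf p. (\<integral>y. f y \<partial>K x) = (\<integral>y. fp y \<partial>K x) - (\<integral>y. fm y \<partial>K x)"
    proof
      fix x assume x: "x \<in> set_pmf p"
      have "(\<integral>y. f y \<partial>K x) = (\<integral>y. fp y - fm y \<partial>K x)" using fdec by simp
      also have "\<dots> = (\<integral>y. fp y \<partial>K x) - (\<integral>y. fm y \<partial>K x)"
        using tower_int[OF ip x] tower_int[OF im x] by (rule Bochner_Integration.integral_diff)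
      finally show "(\<integral>y. f y \<partial>K x) = (\<integral>y. fp y \<partial>K x) - (\<integral>y. fm y \<partial>K x)" .
    qed
    thus ?thesis by (simp add: AE_measure_pmf_iff)
  qed
  have i2: "integrable (measure_pmf p) (\<lambda>x. (\<integral>y. fp y \<partial>K x) - (\<integral>y. fm y \<partial>K x))"
    using P(1) M(1) unfolding fp_def fm_def by auto
  show "integrable (measure_pmf p) (\<lambda>x. \<integral>y. f y \<partial>K x)"
    by (rule integrable_cong_AE_imp[OF i2]) (use inner in \<open>auto simp: AE_measure_pmf_iff\<close>)
  have "(\<integral>y. f y \<partial>bind_pmf p K) = (\<integral>y. fp y - fm y \<partial>bind_pmf p K)" using fdec by simp
  also have "\<dots> = (\<integral>y. fp y \<partial>bind_pmf p K) - (\<integral>y. fm y \<partial>bind_pmf p K)"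
    using ip im by (rule Bochner_Integration.integral_diff)
  also have "\<dots> = (\<integral>x. (\<integral>y. fp y \<partial>K x) \<partial>p) - (\<integral>x. (\<integral>y. fm y \<partial>K x) \<partial>p)"
    using P(2) M(2) unfolding fp_def fm_def by auto
  also have "\<dots> = (\<integral>x. (\<integral>y. fp y \<partial>K x) - (\<integral>y. fm y \<partial>K x) \<partial>p)"
    using P(1) M(1) unfolding fp_def fm_def by (intro Bochner_Integration.integral_diff[symmetric]) auto
  also have "\<dots> = (\<integral>x. (\<integral>y. f y \<partial>K x) \<partial>p)"
    using inner by (intro integral_cong_AE) auto
  finally show "(\<integral>y. f y \<partial>bind_pmf p K) = (\<integral>x. (\<integral>y. f y \<partial>K x) \<partial>p)" .
qed




definition DL :: "nat \<Rightarrow> nat \<Rightarrow> nat list set" where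
  "DL m t = {xs. distinct xs \<and> length xs = t \<and> set xs \<subseteq> {..<m}}"

definition U :: "nat \<Rightarrow> nat \<Rightarrow> nat list pmf" where
  "U m t = pmf_of_set (DL m t)"

lemma DL_finite: "finite (DL m t)"
proof -
  have "DL m t \<subseteq> {xs. set xs \<subseteq> {..<m} \<and> length xs = t}" unfolding DL_def by auto
  thus ?thesis using finite_lists_length_eq[of "{..<m}" t] by (rule finite_subset) simp
qed

lemma DL_ne: "t \<le> m \<Longrightarrow> DL m t \<noteq> {}"
  unfolding DL_def by (rule ccontr) (use nothing in \<open>auto dest!: spec[of _ "[0..<t]"]\<close>)

lemma set_U: "t \<le> m \<Longrightarrow> set_pmf (U m t) = DL m t"
  unfolding U_def using DL_finite DL_ne by simp

lemma U_prefix: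
  assumes "t \<le> L" "L \<le> m"
  shows "map_pmf (take t) (U m L) = U m t"
proof -
  define R where "R = (\<lambda>js::nat list. {rs. length rs = L - t \<and> distinct rs \<and> set rs \<subseteq> {..<m} - set js})"
  define F where "F = (\<lambda>js. (\<lambda>rs. js @ rs) ` R js)"
  define c where "c = \<Prod>{m - t - (L - t) + 1 .. m - t}"
  have cardR: "card (R js) = c" if "js \<in> DL m t" for js
  proof -
    have "card ({..<m} - set js) = m - t"
      using that unfolding DL_def by (auto simp: card_Diff_subset distinct_card)
    then show ?thesis unfolding R_def c_def using assms
      by (subst card_lists_distinct_length_eq) auto
  qed
  have cardF: "card (F js) = c" if "js \<in> DL m t" for js
    unfolding F_def using cardR[OF that] by (subst card_image) (auto intro: inj_onI)
  have finR: "finite (R js)" for js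
  proof -
    have "R js \<subseteq> {xs. set xs \<subseteq> {..<m} \<and> length xs = L - t}" unfolding R_def by auto
    thus ?thesis using finite_lists_length_eq[of "{..<m}" "L-t"] by (rule finite_subset) simp
  qed
  have Rne: "R js \<noteq> {}" if "js \<in> DL m t" for js
  proof -
    have "card (R js) > 0"
      using cardR[OF that] assms unfolding c_def by (auto intro!: prod_pos)
    thus ?thesis by auto
  qed
  have UN: "DL m L = (\<Union>js\<in>DL m t. F js)"
  proof (intro set_eqI iffI)
    fix xs assume "xs \<in> DL m L"
    then have "take t xs \<in> DL m t" "drop t xs \<in> R (take t xs)"
      unfolding DL_def R_def using assms
      by (auto dest: in_set_takeD in_set_dropD simp: set_take_disj_set_drop_if_distinct)
         (metis append_take_drop_id distinct_append disjoint_iff)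
    then show "xs \<in> (\<Union>js\<in>DL m t. F js)" unfolding F_def
      by (intro UN_I[of "take t xs"]) (auto intro!: image_eqI[of _ _ "drop t xs"])
  next
    fix xs assume "xs \<in> (\<Union>js\<in>DL m t. F js)"
    then show "xs \<in> DL m L" unfolding F_def R_def DL_def using assms by auto
  qed
  have disj: "disjoint_family_on F (DL m t)"
    unfolding disjoint_family_on_def F_def DL_def by auto
  have "U m L = do {js \<leftarrow> pmf_of_set (DL m t); pmf_of_set (F js)}"
    unfolding U_def UN
    by (rule pmf_of_set_UN)
       (use DL_finite DL_ne assms cardF disj Rne finR in \<open>auto simp: F_def\<close>)
  then have "map_pmf (take t) (U m L) = do {js \<leftarrow> U m t; map_pmf (take t) (pmf_of_set (F js))}"
    by (simp add: map_bind_pmf U_def)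
  also have "\<dots> = do {js \<leftarrow> U m t; return_pmf js}"
  proof (intro bind_pmf_cong refl)
    fix js assume js: "js \<in> set_pmf (U m t)"
    then have js': "js \<in> DL m t" using set_U assms by auto
    have "map_pmf (take t) (pmf_of_set (F js)) = map_pmf (\<lambda>_. js) (pmf_of_set (F js))"
      using finR Rne[OF js'] js' by (intro map_pmf_cong refl) (auto simp: F_def DL_def)
    then show "map_pmf (take t) (pmf_of_set (F js)) = return_pmf js" by (simp add: map_pmf_const)
  qed
  also have "\<dots> = U m t" by (simp add: bind_return_pmf')
  finally show ?thesis .
qed

lemma U_perm:
  assumes qs: "distinct qs" "set qs = {..<L}" and Lm: "L \<le> m"
  shows "map_pmf (\<lambda>xs. map ((!) xs) qs) (U m L) = U m L"
proof -
  have lq: "length qs = L" using qs by (metis distinct_card card_lessThan)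
  let ?f = "\<lambda>xs. map ((!) xs) qs"
  have inj: "inj_on ?f (DL m L)"
  proof (rule inj_onI)
    fix xs ys assume a: "xs \<in> DL m L" "ys \<in> DL m L" "?f xs = ?f ys"
    have "\<forall>i<L. xs ! i = ys ! i"
    proof (intro allI impI)
      fix i assume "i < L"
      then obtain j where "j < length qs" "qs ! j = i" using qs by (metis in_set_conv_nth lessThan_iff)
      then show "xs ! i = ys ! i" using a(3) by (metis nth_map)
    qed
    then show "xs = ys" using a unfolding DL_def by (auto intro: nth_equalityI)
  qed
  have sub: "?f ` DL m L \<subseteq> DL m L"
  proof
    fix y assume "y \<in> ?f ` DL m L"
    then obtain xs where xs: "xs \<in> DL m L" "y = ?f xs" by auto
    have "inj_on ((!) xs) (set qs)" using xs(1) qs unfolding DL_def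
      by (auto intro!: inj_onI simp: nth_eq_iff_index_eq)
    then have "distinct y" using xs qs by (simp add: distinct_map)
    moreover have "set y \<subseteq> {..<m}" using xs qs unfolding DL_def by (auto dest!: nth_mem intro: subsetD)
    ultimately show "y \<in> DL m L" using xs lq unfolding DL_def by simp
  qed
  have "?f ` DL m L = DL m L" by (rule endo_inj_surj[OF DL_finite sub inj])
  then show ?thesis unfolding U_def
    using map_pmf_of_set_inj[OF inj DL_ne[OF Lm] DL_finite] by simp
qed

lemma U_sel:
  assumes ps: "distinct ps" "set ps \<subseteq> {..<L}" and Lm: "L \<le> m"
  shows "map_pmf (\<lambda>xs. map ((!) xs) ps) (U m L) = U m (length ps)"
proof -
  define qs where "qs = ps @ filter (\<lambda>i. i \<notin> set ps) [0..<L]"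
  have qs1: "distinct qs" "set qs = {..<L}" unfolding qs_def using ps by auto
  have lp: "length ps \<le> L" using ps by (metis card_lessThan card_mono distinct_card finite_lessThan)
  have eq: "\<And>xs. map ((!) xs) ps = take (length ps) (map ((!) xs) qs)"
    unfolding qs_def by auto
  have "map_pmf (\<lambda>xs. map ((!) xs) ps) (U m L) = map_pmf (take (length ps)) (map_pmf (\<lambda>xs. map ((!) xs) qs) (U m L))"
    by (simp add: map_pmf_comp eq)
  also have "\<dots> = U m (length ps)" using U_perm[OF qs1 Lm] U_prefix[OF lp Lm] by simp
  finally show ?thesis .
qed




definition Apmf :: "nat \<Rightarrow> 'a list pmf \<Rightarrow> nat \<Rightarrow> 'a list pmf" where
  "Apmf m \<mu> t = bind_pmf \<mu> (\<lambda>Y. map_pmf (\<lambda>xs. map ((!) Y) xs) (U m t))"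

lemma Apmf_sel:
  assumes len: "\<And>Y. Y \<in> set_pmf \<mu> \<Longrightarrow> length Y = m"
    and ps: "distinct ps" "set ps \<subseteq> {..<L}" and Lm: "L \<le> m"
  shows "map_pmf (\<lambda>w. map ((!) w) ps) (Apmf m \<mu> L) = Apmf m \<mu> (length ps)"
proof -
  have "map_pmf (\<lambda>w. map ((!) w) ps) (Apmf m \<mu> L) =
        bind_pmf \<mu> (\<lambda>Y. map_pmf (\<lambda>w. map ((!) w) ps) (map_pmf (\<lambda>xs. map ((!) Y) xs) (U m L)))"
    unfolding Apmf_def by (simp add: map_bind_pmf)
  also have "\<dots> = bind_pmf \<mu> (\<lambda>Y. map_pmf (\<lambda>xs. map ((!) Y) xs) (map_pmf (\<lambda>xs. map ((!) xs) ps) (U m L)))"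
  proof (intro bind_pmf_cong refl)
    fix Y assume "Y \<in> set_pmf \<mu>"
    have "map_pmf (\<lambda>xs. map ((!) (map ((!) Y) xs)) ps) (U m L) =
          map_pmf (\<lambda>xs. map ((!) Y) (map ((!) xs) ps)) (U m L)"
    proof (intro map_pmf_cong refl)
      fix xs assume "xs \<in> set_pmf (U m L)"
      then have "length xs = L" using set_U[OF Lm] unfolding DL_def by auto
      then show "map ((!) (map ((!) Y) xs)) ps = map ((!) Y) (map ((!) xs) ps)"
        using ps by auto
    qed
    then show "map_pmf (\<lambda>w. map ((!) w) ps) (map_pmf (\<lambda>xs. map ((!) Y) xs) (U m L)) =
          map_pmf (\<lambda>xs. map ((!) Y) xs) (map_pmf (\<lambda>xs. map ((!) xs) ps) (U m L))"
      by (simp add: map_pmf_comp)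
  qed
  also have "\<dots> = Apmf m \<mu> (length ps)"
    unfolding Apmf_def U_sel[OF ps Lm] ..
  finally show ?thesis .
qed

lemma Apmf_prefix:
  assumes len: "\<And>Y. Y \<in> set_pmf \<mu> \<Longrightarrow> length Y = m" and "t \<le> L" "L \<le> m"
  shows "map_pmf (take t) (Apmf m \<mu> L) = Apmf m \<mu> t"
proof -
  have "map_pmf (take t) (Apmf m \<mu> L) = map_pmf (\<lambda>w. map ((!) w) [0..<t]) (Apmf m \<mu> L)"
  proof (intro map_pmf_cong refl)
    fix w assume "w \<in> set_pmf (Apmf m \<mu> L)"
    then have "length w = L" unfolding Apmf_def using set_U[OF assms(3)] by (auto simp: DL_def)
    then show "take t w = map ((!) w) [0..<t]" using assms by (intro nth_equalityI) auto
  qed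
  also have "\<dots> = Apmf m \<mu> t" using Apmf_sel[where \<mu>=\<mu> and m=m and ps="[0..<t]" and L=L] len assms by (simp add: subset_eq)
  finally show ?thesis .
qed

lemma set_Apmf: "t \<le> m \<Longrightarrow> w \<in> set_pmf (Apmf m \<mu> t) \<Longrightarrow> length w = t"
  unfolding Apmf_def using set_U by (auto simp: DL_def)

lemma Apmf_0: "Apmf m \<mu> 0 = return_pmf []"
proof -
  have "DL m 0 = {[]}" unfolding DL_def by auto
  then have "U m 0 = return_pmf []" unfolding U_def by (simp add: pmf_of_set_singleton)
  then show ?thesis unfolding Apmf_def by (simp add: bind_return_pmf')
qed

lemma grouped_Apmf:
  "grouped m n k \<mu> = map_pmf (\<lambda>w. (take n w, drop n w)) (Apmf m \<mu> (n+k))"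
  unfolding grouped_def Apmf_def U_def DL_def
  by (simp add: map_bind_pmf map_pmf_def bind_assoc_pmf bind_return_pmf take_map drop_map)




lemma pmf_replicate:
  "pmf (replicate_pmf n p) xs = (if length xs = n then prod_list (map (pmf p) xs) else 0)"
proof (induction n arbitrary: xs)
  case 0 then show ?case by (cases xs) (auto simp: indicator_def)
next
  case (Suc n)
  have rep: "replicate_pmf (Suc n) p = bind_pmf p (\<lambda>x. map_pmf (Cons x) (replicate_pmf n p))"
    by (simp add: map_pmf_def)
  show ?case
  proof (cases xs)
    case Nil
    have "pmf (replicate_pmf (Suc n) p) [] = 0"
      by (simp add: rep pmf_eq_0_set_pmf)
    then show ?thesis using Nil by simp
  next
    case (Cons y ys)
    have "pmf (replicate_pmf (Suc n) p) (y#ys) = (\<integral>x. pmf (map_pmf (Cons x) (replicate_pmf n p)) (y#ys) \<partial>p)"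
      unfolding rep pmf_bind ..
    also have "\<dots> = (\<integral>x. indicator {y} x * pmf (replicate_pmf n p) ys \<partial>p)"
    proof (intro Bochner_Integration.integral_cong refl)
      fix x
      show "pmf (map_pmf (Cons x) (replicate_pmf n p)) (y#ys) = indicator {y} x * pmf (replicate_pmf n p) ys"
      proof (cases "x = y")
        case True then show ?thesis by (simp add: pmf_map_inj')
      next
        case False then show ?thesis by (auto intro!: pmf_map_outside)
      qed
    qed
    also have "\<dots> = pmf p y * pmf (replicate_pmf n p) ys"
      by (simp add: measure_pmf_single)
    finally show ?thesis using Suc.IH Cons by simp
  qed
qed

locale core =
  fixes A :: "nat \<Rightarrow> 'a list pmf" and m :: nat and R :: "'a \<Rightarrow> real" and r :: real and Q0 :: "'a pmf"
  assumes len: "\<And>t w. t \<le> m \<Longrightarrow> w \<in> set_pmf (A t) \<Longrightarrow> length w = t"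
  and sel: "\<And>ps L. distinct ps \<Longrightarrow> set ps \<subseteq> {..<L} \<Longrightarrow> L \<le> m \<Longrightarrow>
             map_pmf (\<lambda>w. map ((!) w) ps) (A L) = A (length ps)"
  and A0: "A 0 = return_pmf []"
  and dom: "\<And>t w. t \<le> m \<Longrightarrow> pmf (A t) w \<le> prod_list (map R w)"
  and Rnn: "\<And>x. R x \<ge> 0" and rpos: "r > 0" and Q0: "\<And>x. pmf Q0 x = R x / r"
begin

definition PR :: "'a list \<Rightarrow> real" where "PR w = prod_list (map R w)"
definition Lf :: "nat \<Rightarrow> 'a list \<Rightarrow> real" where "Lf t w = ln (pmf (A t) w / PR w)"
definition h :: "nat \<Rightarrow> real" where "h t = (\<integral>w. Lf t w \<partial>A t)"

lemma supp_pos: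
  assumes "t \<le> m" "w \<in> set_pmf (A t)"
  shows "0 < pmf (A t) w" "pmf (A t) w \<le> PR w" "0 < PR w"
proof -
  have p: "0 < pmf (A t) w" using assms(2) by (simp add: pmf_positive)
  have q: "pmf (A t) w \<le> PR w" using dom[OF assms(1)] unfolding PR_def .
  show "0 < pmf (A t) w" "pmf (A t) w \<le> PR w" "0 < PR w" using p q by auto
qed

lemma sel_supp:
  assumes "w \<in> set_pmf (A L)" "distinct ps" "set ps \<subseteq> {..<L}" "L \<le> m"
  shows "map ((!) w) ps \<in> set_pmf (A (length ps))"
proof -
  have "map ((!) w) ps \<in> set_pmf (map_pmf (\<lambda>w. map ((!) w) ps) (A L))" unfolding set_map_pmf using assms(1) by (rule imageI)
  thus ?thesis using sel[OF assms(2-4)] by simp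
qed

lemma PR_eq: "PR w = r ^ length w * pmf (replicate_pmf (length w) Q0) w"
proof -
  have e1: "r ^ length w * prod_list (map (\<lambda>x. R x / r) w) = prod_list (map R w)"
    using rpos by (induction w) (auto simp: field_simps)
  have e2: "prod_list (map (pmf Q0) w) = prod_list (map (\<lambda>x. R x / r) w)"
    by (induction w) (simp_all add: Q0)
  have e3: "pmf (replicate_pmf (length w) Q0) w = prod_list (map (pmf Q0) w)"
    by (simp add: pmf_replicate)
  show ?thesis unfolding PR_def e3 e2 e1 ..
qed

lemma Lf_int:
  assumes t: "t \<le> m"
  shows "integrable (A t) (Lf t)"
proof -
  have bnd: "AE w in A t. ennreal (norm (Lf t w)) \<le> ennreal (PR w / pmf (A t) w)"
  proof -
    have "\<forall>w\<in>set_pmf (A t). norm (Lf t w) \<le> PR w / pmf (A t) w"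
    proof
      fix w assume w: "w \<in> set_pmf (A t)"
      note sp = supp_pos[OF t w]
      have le0: "Lf t w \<le> 0" unfolding Lf_def using sp by (simp add: ln_div)
      have "- Lf t w = ln (PR w / pmf (A t) w)" unfolding Lf_def using sp by (simp add: ln_div)
      also have "\<dots> \<le> PR w / pmf (A t) w - 1" using sp by (intro ln_le_minus_one) simp
      finally show "norm (Lf t w) \<le> PR w / pmf (A t) w" using le0 by simp
    qed
    thus ?thesis by (auto simp: AE_measure_pmf_iff intro!: ennreal_leI)
  qed
  have "(\<integral>\<^sup>+w. ennreal (norm (Lf t w)) \<partial>A t) \<le> (\<integral>\<^sup>+w. ennreal (PR w / pmf (A t) w) \<partial>A t)"
    by (rule nn_integral_mono_AE[OF bnd])
  also have "\<dots> = (\<integral>\<^sup>+w. ennreal (pmf (A t) w) * ennreal (PR w / pmf (A t) w) \<partial>count_space UNIV)"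
    by (simp add: nn_integral_measure_pmf)
  also have "\<dots> \<le> (\<integral>\<^sup>+w. ennreal (r ^ t) * ennreal (pmf (replicate_pmf t Q0) w) \<partial>count_space UNIV)"
  proof (intro nn_integral_mono)
    fix w
    show "ennreal (pmf (A t) w) * ennreal (PR w / pmf (A t) w) \<le> ennreal (r ^ t) * ennreal (pmf (replicate_pmf t Q0) w)"
    proof (cases "w \<in> set_pmf (A t)")
      case False then show ?thesis by (simp add: set_pmf_iff)
    next
      case True
      note sp = supp_pos[OF t True]
      have "ennreal (pmf (A t) w) * ennreal (PR w / pmf (A t) w) = ennreal (PR w)"
        using sp by (simp add: ennreal_mult[symmetric])
      also have "\<dots> = ennreal (r ^ t) * ennreal (pmf (replicate_pmf t Q0) w)"
        using PR_eq[of w] len[OF t True] rpos by (simp add: ennreal_mult)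
      finally show ?thesis by simp
    qed
  qed
  also have "\<dots> = ennreal (r ^ t) * (\<integral>\<^sup>+w. ennreal (pmf (replicate_pmf t Q0) w) \<partial>count_space UNIV)"
    by (rule nn_integral_cmult) simp
  also have "\<dots> = ennreal (r ^ t)" by (simp add: nn_integral_pmf)
  finally have "(\<integral>\<^sup>+w. ennreal (norm (Lf t w)) \<partial>A t) < \<infinity>"
    by (rule le_less_trans) simp
  then show ?thesis by (simp add: integrable_iff_bounded)
qed

lemma h_le0: assumes t: "t \<le> m" shows "h t \<le> 0"
proof -
  have "(\<integral>w. Lf t w \<partial>A t) \<le> (\<integral>w. 0 \<partial>A t)"
    by (rule integral_mono_AE[OF Lf_int[OF t]])
       (use supp_pos[OF t] in \<open>auto simp: AE_measure_pmf_iff Lf_def ln_div less_imp_le\<close>)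
  thus ?thesis unfolding h_def by simp
qed

lemma h0: "h 0 = 0"
  unfolding h_def Lf_def A0 by (simp add: PR_def)

end



lemma map_nth_upt: "k \<le> length x \<Longrightarrow> map ((!) x) [0..<k] = take k x"
  by (intro nth_equalityI) auto

lemma pmf_map_on_supp:
  assumes "\<And>x. x \<in> set_pmf M \<Longrightarrow> f x = y \<longleftrightarrow> x = x0"
  shows "pmf (map_pmf f M) y = pmf M x0"
proof -
  have "pmf (map_pmf f M) y = measure M (f -` {y})" by (rule pmf_map)
  also have "\<dots> = measure M (f -` {y} \<inter> set_pmf M)" by (simp add: measure_Int_set_pmf)
  also have "f -` {y} \<inter> set_pmf M = {x0} \<inter> set_pmf M" using assms by auto
  also have "measure M \<dots> = measure M {x0}" by (simp add: measure_Int_set_pmf)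
  also have "\<dots> = pmf M x0" by (simp add: measure_pmf_single)
  finally show ?thesis .
qed

lemma measure_cong_supp:
  assumes "\<And>x. x \<in> set_pmf M \<Longrightarrow> x \<in> S \<longleftrightarrow> x \<in> T"
  shows "measure M S = measure M T"
proof -
  have "measure M S = measure M (S \<inter> set_pmf M)" by (simp add: measure_Int_set_pmf)
  also have "S \<inter> set_pmf M = T \<inter> set_pmf M" using assms by auto
  also have "measure M \<dots> = measure M T" by (simp add: measure_Int_set_pmf)
  finally show ?thesis .
qed

lemma pmf_bind_single:
  assumes "\<And>v. v \<in> set_pmf P \<Longrightarrow> v \<noteq> v0 \<Longrightarrow> pmf (K v) x = 0"
  shows "pmf (bind_pmf P K) x = pmf P v0 * pmf (K v0) x"
proof -
  have "pmf (bind_pmf P K) x = (\<integral>v. pmf (K v) x \<partial>P)" by (rule pmf_bind)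
  also have "\<dots> = (\<integral>v. indicator {v0} v * pmf (K v0) x \<partial>P)"
    using assms by (intro integral_cong_AE) (auto simp: AE_measure_pmf_iff indicator_def)
  also have "\<dots> = pmf P v0 * pmf (K v0) x" by (simp add: measure_pmf_single)
  finally show ?thesis .
qed

context core begin

lemma sel_int:
  assumes "distinct ps" "set ps \<subseteq> {..<L}" "L \<le> m"
  shows "integrable (A L) (\<lambda>w. Lf (length ps) (map ((!) w) ps))"
    and "(\<integral>w. Lf (length ps) (map ((!) w) ps) \<partial>A L) = h (length ps)"
proof -
  have lp: "length ps \<le> m"
    using assms by (metis card_lessThan card_mono distinct_card finite_lessThan order_trans)
  have "integrable (map_pmf (\<lambda>w. map ((!) w) ps) (A L)) (Lf (length ps))"
    unfolding sel[OF assms] by (rule Lf_int[OF lp])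
  then show "integrable (A L) (\<lambda>w. Lf (length ps) (map ((!) w) ps))" by simp
  have "(\<integral>w. Lf (length ps) w \<partial>map_pmf (\<lambda>w. map ((!) w) ps) (A L)) = h (length ps)"
    unfolding sel[OF assms] h_def ..
  then show "(\<integral>w. Lf (length ps) (map ((!) w) ps) \<partial>A L) = h (length ps)" by simp
qed

lemma prefix_measure:
  assumes "t < m"
  shows "measure (A (Suc t)) {v. butlast v = w} = pmf (A t) w"
proof -
  have "measure (A (Suc t)) {v. butlast v = w} = measure (A (Suc t)) ((\<lambda>v. map ((!) v) [0..<t]) -` {w})"
  proof (rule measure_cong_supp)
    fix v assume v: "v \<in> set_pmf (A (Suc t))"
    then have "length v = Suc t" using len assms by simp
    then have "butlast v = map ((!) v) [0..<t]"
      by (intro nth_equalityI) (auto simp: nth_butlast)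
    then show "v \<in> {v. butlast v = w} \<longleftrightarrow> v \<in> (\<lambda>v. map ((!) v) [0..<t]) -` {w}" by simp
  qed
  also have "\<dots> = pmf (map_pmf (\<lambda>v. map ((!) v) [0..<t]) (A (Suc t))) w" by (simp add: pmf_map)
  also have "\<dots> = pmf (A t) w" using sel[of "[0..<t]" "Suc t"] assms by (simp add: subset_eq)
  finally show ?thesis .
qed

definition Kn :: "nat \<Rightarrow> 'a list \<Rightarrow> 'a pmf" where
  "Kn t w = map_pmf last (cond_pmf (A (Suc t)) {v. butlast v = w})"

lemma Kn_pmf:
  assumes t: "t < m" and w: "w \<in> set_pmf (A t)"
  shows "pmf (Kn t w) b = pmf (A (Suc t)) (w @ [b]) / pmf (A t) w"
proof -
  have ne: "set_pmf (A (Suc t)) \<inter> {v. butlast v = w} \<noteq> {}"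
  proof
    assume e: "set_pmf (A (Suc t)) \<inter> {v. butlast v = w} = {}"
    have "measure (A (Suc t)) {v. butlast v = w} = 0" using e by (simp add: measure_pmf_zero_iff)
    then show False using prefix_measure[OF t, of w] supp_pos(1)[OF _ w] t by simp
  qed
  have "pmf (Kn t w) b = pmf (cond_pmf (A (Suc t)) {v. butlast v = w}) (w @ [b])"
    unfolding Kn_def
  proof (rule pmf_map_on_supp)
    fix v assume "v \<in> set_pmf (cond_pmf (A (Suc t)) {v. butlast v = w})"
    then have v: "v \<in> set_pmf (A (Suc t))" "butlast v = w" using set_cond_pmf[OF ne] by auto
    then have "length v = Suc t" using len t by simp
    then have "v = w @ [last v]" using v(2) by (metis append_butlast_last_id list.size(3) nat.distinct(1))
    then show "last v = b \<longleftrightarrow> v = w @ [b]" by auto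
  qed
  also have "\<dots> = pmf (A (Suc t)) (w @ [b]) / pmf (A t) w"
    using pmf_cond[OF ne] prefix_measure[OF t] by simp
  finally show ?thesis .
qed

definition Mc :: "nat \<Rightarrow> 'a list pmf" where
  "Mc t = bind_pmf (A (Suc t)) (\<lambda>v. map_pmf (\<lambda>b. v @ [b]) (Kn t (butlast v)))"

lemma Mc_pmf:
  assumes t: "Suc t < m" and x: "x \<in> set_pmf (A (Suc (Suc t)))"
  shows "pmf (Mc t) x = pmf (A (Suc t)) (take (Suc t) x) * (pmf (A (Suc t)) (take t x @ [x ! Suc t]) / pmf (A t) (take t x))"
proof -
  have lx: "length x = Suc (Suc t)" using len x t by simp
  define v where "v = take (Suc t) x"
  define b where "b = x ! Suc t"
  have xv: "x = v @ [b]" unfolding v_def b_def using lx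
    by (intro nth_equalityI) (auto simp: nth_append less_Suc_eq)
  have bv: "butlast v = take t x" unfolding v_def using lx by (simp add: butlast_take)
  have "map ((!) x) [0..<Suc t] \<in> set_pmf (A (length [0..<Suc t]))"
    by (rule sel_supp[OF x]) (use t in \<open>simp_all add: subset_eq\<close>)
  then have vsupp: "v \<in> set_pmf (A (Suc t))" unfolding v_def using lx map_nth_upt[of "Suc t" x] by simp
  have "map ((!) x) [0..<t] \<in> set_pmf (A (length [0..<t]))"
    by (rule sel_supp[OF x]) (use t in \<open>simp_all add: subset_eq\<close>)
  then have wsupp: "take t x \<in> set_pmf (A t)" using lx map_nth_upt[of t x] by simp
  have "pmf (Mc t) x = pmf (A (Suc t)) v * pmf (map_pmf (\<lambda>b. v @ [b]) (Kn t (butlast v))) x"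
    unfolding Mc_def
  proof (rule pmf_bind_single)
    fix v' assume "v' \<in> set_pmf (A (Suc t))" "v' \<noteq> v"
    then show "pmf (map_pmf (\<lambda>b. v' @ [b]) (Kn t (butlast v'))) x = 0"
      using xv by (intro pmf_map_outside) auto
  qed
  also have "pmf (map_pmf (\<lambda>b. v @ [b]) (Kn t (butlast v))) x = pmf (Kn t (butlast v)) b"
    unfolding xv by (rule pmf_map_inj') (auto intro: inj_onI)
  also have "\<dots> = pmf (A (Suc t)) (take t x @ [b]) / pmf (A t) (take t x)"
    unfolding bv by (rule Kn_pmf) (use t wsupp in auto)
  finally show ?thesis unfolding v_def b_def .
qed

end



context core begin

lemma Lf_eq: assumes "t \<le> m" "w \<in> set_pmf (A t)" shows "Lf t w = ln (pmf (A t) w) - ln (PR w)"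
proof -
  note s = supp_pos[OF assms]
  show ?thesis unfolding Lf_def ln_div using s by simp
qed

lemma h1_ge: assumes m1: "1 \<le> m" shows "- ln r \<le> h 1"
proof -
  define q where "q = map_pmf (\<lambda>x. [x]) Q0"
  have qw: "pmf q w = PR w / r" if w: "w \<in> set_pmf (A 1)" for w
  proof -
    have "length w = 1" using len[OF m1 w] .
    then obtain x where x: "w = [x]" by (cases w) auto
    have "pmf q [x] = pmf Q0 x" unfolding q_def by (rule pmf_map_inj') (auto intro: injI)
    then show ?thesis using x by (simp add: Q0 PR_def)
  qed
  have pos: "pmf q w > 0" if w: "w \<in> set_pmf (A 1)" for w
    using qw[OF w] supp_pos(3)[OF m1 w] rpos by simp
  have eq: "ln (pmf (A 1) w / pmf q w) = Lf 1 w + ln r" if w: "w \<in> set_pmf (A 1)" for w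
    using qw[OF w] supp_pos[OF m1 w] rpos unfolding Lf_def by (simp add: ln_div ln_mult)
  have ae: "AE w in A 1. ln (pmf (A 1) w / pmf q w) = Lf 1 w + ln r"
    using eq by (simp add: AE_measure_pmf_iff)
  have i1: "integrable (A 1) (\<lambda>w. Lf 1 w + ln r)" using Lf_int[OF m1] by simp
  have int: "integrable (A 1) (\<lambda>w. ln (pmf (A 1) w / pmf q w))"
    by (rule integrable_cong_AE_imp[OF i1]) (use ae in \<open>auto simp: AE_measure_pmf_iff\<close>)
  have "0 \<le> (\<integral>w. ln (pmf (A 1) w / pmf q w) \<partial>A 1)" by (rule gibbs_pmf[OF pos int])
  also have "\<dots> = (\<integral>w. Lf 1 w + ln r \<partial>A 1)" by (rule integral_cong_AE) (use ae in auto)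
  also have "\<dots> = h 1 + ln r" unfolding h_def using Lf_int[OF m1] by simp
  finally show ?thesis by simp
qed

lemma h_convex:
  assumes t: "Suc (Suc t) \<le> m"
  shows "2 * h (Suc t) \<le> h t + h (Suc (Suc t))"
proof -
  let ?p = "A (Suc (Suc t))"
  define ps1 where "ps1 = [0..<Suc t]"
  define ps2 where "ps2 = [0..<t] @ [Suc t]"
  define ps0 where "ps0 = [0..<t]"
  have d: "distinct ps1" "set ps1 \<subseteq> {..<Suc (Suc t)}" "distinct ps2" "set ps2 \<subseteq> {..<Suc (Suc t)}"
          "distinct ps0" "set ps0 \<subseteq> {..<Suc (Suc t)}"
    unfolding ps1_def ps2_def ps0_def by auto
  have l: "length ps1 = Suc t" "length ps2 = Suc t" "length ps0 = t"
    unfolding ps1_def ps2_def ps0_def by auto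
  define F where "F = (\<lambda>x. Lf (Suc (Suc t)) x - Lf (Suc t) (map ((!) x) ps1) - Lf (Suc t) (map ((!) x) ps2) + Lf t (map ((!) x) ps0))"
  have iF: "integrable ?p F"
    unfolding F_def using Lf_int[OF t] sel_int(1)[OF d(1,2) t] sel_int(1)[OF d(3,4) t] sel_int(1)[OF d(5,6) t] l
    by auto
  have EF: "(\<integral>x. F x \<partial>?p) = h (Suc (Suc t)) - h (Suc t) - h (Suc t) + h t"
    unfolding F_def using Lf_int[OF t] sel_int[OF d(1,2) t] sel_int[OF d(3,4) t] sel_int[OF d(5,6) t] l
    by (simp add: h_def)
  have pos: "pmf (Mc t) x > 0" and eq: "ln (pmf ?p x / pmf (Mc t) x) = F x" if x: "x \<in> set_pmf ?p" for x
  proof -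
    have lx: "length x = Suc (Suc t)" using len[OF t x] .
    have s1: "map ((!) x) ps1 \<in> set_pmf (A (Suc t))" using sel_supp[OF x d(1,2) t] l by simp
    have s2: "map ((!) x) ps2 \<in> set_pmf (A (Suc t))" using sel_supp[OF x d(3,4) t] l by simp
    have s0: "map ((!) x) ps0 \<in> set_pmf (A t)" using sel_supp[OF x d(5,6) t] l by simp
    have e1: "map ((!) x) ps1 = take (Suc t) x" unfolding ps1_def using lx by (intro map_nth_upt) simp
    have e2: "map ((!) x) ps2 = take t x @ [x ! Suc t]" unfolding ps2_def using lx map_nth_upt[of t x] by simp
    have e0: "map ((!) x) ps0 = take t x" unfolding ps0_def using lx by (intro map_nth_upt) simp
    have t1: "Suc t \<le> m" "t \<le> m" using t by auto
    note P1 = supp_pos[OF t1(1) s1] and P2 = supp_pos[OF t1(1) s2] and P0 = supp_pos[OF t1(2) s0]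
      and Px = supp_pos[OF t x]
    have mc: "pmf (Mc t) x = pmf (A (Suc t)) (map ((!) x) ps1) * (pmf (A (Suc t)) (map ((!) x) ps2) / pmf (A t) (map ((!) x) ps0))"
      using Mc_pmf[OF _ x] t unfolding e1 e2 e0 by simp
    show "pmf (Mc t) x > 0" unfolding mc using P1 P2 P0 by simp
    have xs: "x = take t x @ [x ! t, x ! Suc t]" using lx
      by (intro nth_equalityI) (auto simp: nth_append less_Suc_eq)
    have pr1: "PR (take (Suc t) x) = PR (take t x) * R (x ! t)"
      using lx by (simp add: PR_def take_Suc_conv_app_nth)
    have prx: "PR x = PR (take t x) * R (x ! t) * R (x ! Suc t)"
      using arg_cong[OF xs, of PR] by (simp add: PR_def)
    have prr: "PR x * PR (take t x) = PR (take (Suc t) x) * PR (take t x @ [x ! Suc t])"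
      unfolding prx pr1 by (simp add: PR_def)
    have q1: "0 < PR (take (Suc t) x)" using P1(3) e1 by simp
    have q2: "0 < PR (take t x @ [x ! Suc t])" using P2(3) e2 by simp
    have q0: "0 < PR (take t x)" using P0(3) e0 by simp
    have "ln (PR x * PR (take t x)) = ln (PR (take (Suc t) x) * PR (take t x @ [x ! Suc t]))"
      by (simp only: prr)
    then have lnpr: "ln (PR x) + ln (PR (take t x)) = ln (PR (take (Suc t) x)) + ln (PR (take t x @ [x ! Suc t]))"
      using q1 q2 q0 Px(3) by (simp add: ln_mult)
    have "ln (pmf ?p x / pmf (Mc t) x) = ln (pmf ?p x) - ln (pmf (A (Suc t)) (map ((!) x) ps1))
            - ln (pmf (A (Suc t)) (map ((!) x) ps2)) + ln (pmf (A t) (map ((!) x) ps0))"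
      unfolding mc using P1 P2 P0 Px by (simp add: ln_div ln_mult)
    also have "\<dots> = F x"
      unfolding F_def using Lf_eq[OF t x] Lf_eq[OF t1(1) s1] Lf_eq[OF t1(1) s2] Lf_eq[OF t1(2) s0] lnpr
      unfolding e1 e2 e0 by simp
    finally show "ln (pmf ?p x / pmf (Mc t) x) = F x" .
  qed
  have ae: "AE x in ?p. ln (pmf ?p x / pmf (Mc t) x) = F x" using eq by (simp add: AE_measure_pmf_iff)
  have int: "integrable ?p (\<lambda>x. ln (pmf ?p x / pmf (Mc t) x))"
    by (rule integrable_cong_AE_imp[OF iF]) (use ae in \<open>auto simp: AE_measure_pmf_iff\<close>)
  have "0 \<le> (\<integral>x. ln (pmf ?p x / pmf (Mc t) x) \<partial>?p)" by (rule gibbs_pmf[OF pos int])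
  also have "\<dots> = (\<integral>x. F x \<partial>?p)" by (rule integral_cong_AE) (use ae in auto)
  finally show ?thesis using EF by simp
qed

end



lemma map_nth_upt2: "length w = n + k \<Longrightarrow> map ((!) w) [n..<n+k] = drop n w"
  by (intro nth_equalityI) auto

lemma cond_pmf_cong_supp:
  assumes "\<And>x. x \<in> set_pmf P \<Longrightarrow> x \<in> S \<longleftrightarrow> x \<in> T" and ne: "set_pmf P \<inter> S \<noteq> {}"
  shows "cond_pmf P S = cond_pmf P T"
proof -
  have ne2: "set_pmf P \<inter> T \<noteq> {}" using assms by auto
  have m: "measure P S = measure P T" by (rule measure_cong_supp) (use assms in auto)
  show ?thesis
  proof (rule pmf_eqI)
    fix x
    show "pmf (cond_pmf P S) x = pmf (cond_pmf P T) x"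
      unfolding pmf_cond[OF ne] pmf_cond[OF ne2] m
      using assms(1)[of x] by (auto simp: set_pmf_iff)
  qed
qed

context core begin

definition grp :: "nat \<Rightarrow> nat \<Rightarrow> 'a list \<Rightarrow> 'a list pmf" where
  "grp n k c = map_pmf (take n) (cond_pmf (A (n+k)) {w. drop n w = c})"

definition gl :: "nat \<Rightarrow> 'a list \<Rightarrow> 'a pmf" where
  "gl k c = map_pmf hd (cond_pmf (A (Suc k)) {v. tl v = c})"

lemma drop_measure:
  assumes nk: "n + k \<le> m"
  shows "measure (A (n+k)) {w. drop n w = c} = pmf (A k) c"
proof -
  have "measure (A (n+k)) {w. drop n w = c} = measure (A (n+k)) ((\<lambda>w. map ((!) w) [n..<n+k]) -` {c})"
    by (rule measure_cong_supp) (use len[OF nk] map_nth_upt2 in auto)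
  also have "\<dots> = pmf (map_pmf (\<lambda>w. map ((!) w) [n..<n+k]) (A (n+k))) c" by (simp add: pmf_map)
  also have "\<dots> = pmf (A k) c" using sel[of "[n..<n+k]" "n+k"] nk by (simp add: subset_eq)
  finally show ?thesis .
qed

lemma tl_measure:
  assumes k: "Suc k \<le> m"
  shows "measure (A (Suc k)) {v. tl v = c} = pmf (A k) c"
proof -
  have "measure (A (Suc k)) {v. tl v = c} = measure (A (1+k)) {w. drop 1 w = c}"
    by (simp add: drop_Suc)
  also have "\<dots> = pmf (A k) c" by (rule drop_measure) (use k in simp)
  finally show ?thesis .
qed

lemma ne_of_pos: "measure (measure_pmf P) S > 0 \<Longrightarrow> set_pmf P \<inter> S \<noteq> {}"
  using measure_pmf_zero_iff[of P S] by auto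

lemma grp_pmf:
  assumes nk: "n + k \<le> m" and w: "w \<in> set_pmf (A (n+k))"
  shows "pmf (grp n k (drop n w)) (take n w) = pmf (A (n+k)) w / pmf (A k) (drop n w)"
    and "set_pmf (A (n+k)) \<inter> {v. drop n v = drop n w} \<noteq> {}"
proof -
  show ne: "set_pmf (A (n+k)) \<inter> {v. drop n v = drop n w} \<noteq> {}" using w by auto
  have lw: "length w = n + k" using len[OF nk w] .
  have "pmf (grp n k (drop n w)) (take n w) = pmf (cond_pmf (A (n+k)) {v. drop n v = drop n w}) w"
    unfolding grp_def
  proof (rule pmf_map_on_supp)
    fix v assume "v \<in> set_pmf (cond_pmf (A (n+k)) {v. drop n v = drop n w})"
    then have v: "v \<in> set_pmf (A (n+k))" "drop n v = drop n w" using set_cond_pmf[OF ne] by auto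
    have lv: "length v = n + k" using len[OF nk v(1)] .
    show "take n v = take n w \<longleftrightarrow> v = w"
      using v(2) by (metis append_take_drop_id)
  qed
  also have "\<dots> = pmf (A (n+k)) w / pmf (A k) (drop n w)"
    unfolding pmf_cond[OF ne] drop_measure[OF nk] by simp
  finally show "pmf (grp n k (drop n w)) (take n w) = pmf (A (n+k)) w / pmf (A k) (drop n w)" .
qed

lemma gl_pmf:
  assumes k: "Suc k \<le> m" and c: "c \<in> set_pmf (A k)"
  shows "pmf (gl k c) x = pmf (A (Suc k)) (x # c) / pmf (A k) c"
    and "set_pmf (A (Suc k)) \<inter> {v. tl v = c} \<noteq> {}"
proof -
  have k': "k \<le> m" using k by simp
  show ne: "set_pmf (A (Suc k)) \<inter> {v. tl v = c} \<noteq> {}"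
    by (rule ne_of_pos) (use tl_measure[OF k] supp_pos(1)[OF k' c] in simp)
  have "pmf (gl k c) x = pmf (cond_pmf (A (Suc k)) {v. tl v = c}) (x # c)"
    unfolding gl_def
  proof (rule pmf_map_on_supp)
    fix v assume "v \<in> set_pmf (cond_pmf (A (Suc k)) {v. tl v = c})"
    then have v: "v \<in> set_pmf (A (Suc k))" "tl v = c" using set_cond_pmf[OF ne] by auto
    have "length v = Suc k" using len[OF k v(1)] .
    then have "v = hd v # c" using v(2) by (cases v) auto
    then show "hd v = x \<longleftrightarrow> v = x # c" by auto
  qed
  also have "\<dots> = pmf (A (Suc k)) (x # c) / pmf (A k) c"
    unfolding pmf_cond[OF ne] tl_measure[OF k] by simp
  finally show "pmf (gl k c) x = pmf (A (Suc k)) (x # c) / pmf (A k) c" .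
qed

definition Phi :: "nat \<Rightarrow> nat \<Rightarrow> 'a list \<Rightarrow> real" where
  "Phi n k w = Lf (n+k) w - Lf k (map ((!) w) [n..<n+k])
     - (\<Sum>j<n. Lf (Suc k) (map ((!) w) (j # [n..<n+k])) - Lf k (map ((!) w) [n..<n+k]))"

lemma Phi_int:
  assumes nk: "n + k \<le> m"
  shows "integrable (A (n+k)) (Phi n k)"
    and "(\<integral>w. Phi n k w \<partial>A (n+k)) = h (n+k) - h k - real n * (h (Suc k) - h k)"
proof -
  have d0: "distinct [n..<n+k]" "set [n..<n+k] \<subseteq> {..<n+k}" by auto
  have dj: "distinct (j # [n..<n+k])" "set (j # [n..<n+k]) \<subseteq> {..<n+k}" if "j < n" for j
    using that by auto
  note I0 = sel_int[OF d0 nk] and Ij = sel_int[OF dj nk]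
  have ij: "integrable (A (n+k)) (\<lambda>w. Lf (Suc k) (map ((!) w) (j # [n..<n+k])) - Lf k (map ((!) w) [n..<n+k]))"
    if "j < n" for j
    using Ij(1)[OF that that] I0(1) by simp
  have isum: "integrable (A (n+k)) (\<lambda>w. \<Sum>j<n. Lf (Suc k) (map ((!) w) (j # [n..<n+k])) - Lf k (map ((!) w) [n..<n+k]))"
    by (rule Bochner_Integration.integrable_sum[where f="\<lambda>j w. Lf (Suc k) (map ((!) w) (j # [n..<n+k])) - Lf k (map ((!) w) [n..<n+k])"])
       (use ij in auto)
  show "integrable (A (n+k)) (Phi n k)"
    unfolding Phi_def
    using I0(1) by (intro Bochner_Integration.integrable_diff Lf_int[OF nk] isum) simp
  have I0i: "integrable (A (n+k)) (\<lambda>w. Lf k (map ((!) w) [n..<n+k]))" using I0(1) by simp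
  have I0e: "(\<integral>w. Lf k (map ((!) w) [n..<n+k]) \<partial>A (n+k)) = h k" using I0(2) by simp
  have "(\<integral>w. Phi n k w \<partial>A (n+k)) = (\<integral>w. Lf (n+k) w - Lf k (map ((!) w) [n..<n+k]) \<partial>A (n+k))
     - (\<integral>w. (\<Sum>j<n. Lf (Suc k) (map ((!) w) (j # [n..<n+k])) - Lf k (map ((!) w) [n..<n+k])) \<partial>A (n+k))"
    unfolding Phi_def
    by (rule Bochner_Integration.integral_diff)
       (intro Bochner_Integration.integrable_diff Lf_int[OF nk] I0i, rule isum)
  also have "(\<integral>w. Lf (n+k) w - Lf k (map ((!) w) [n..<n+k]) \<partial>A (n+k)) = h (n+k) - h k"
    using Bochner_Integration.integral_diff[OF Lf_int[OF nk] I0i] I0e unfolding h_def by simp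
  also have "(\<integral>w. (\<Sum>j<n. Lf (Suc k) (map ((!) w) (j # [n..<n+k])) - Lf k (map ((!) w) [n..<n+k])) \<partial>A (n+k))
     = (\<Sum>j<n. (\<integral>w. Lf (Suc k) (map ((!) w) (j # [n..<n+k])) - Lf k (map ((!) w) [n..<n+k]) \<partial>A (n+k)))"
    by (rule Bochner_Integration.integral_sum) (use ij in auto)
  also have "(\<Sum>j<n. (\<integral>w. Lf (Suc k) (map ((!) w) (j # [n..<n+k])) - Lf k (map ((!) w) [n..<n+k]) \<partial>A (n+k)))
      = (\<Sum>j<n. h (Suc k) - h k)"
  proof (intro sum.cong refl)
    fix j assume "j \<in> {..<n}"
    then have j: "j < n" by simp
    show "(\<integral>w. Lf (Suc k) (map ((!) w) (j # [n..<n+k])) - Lf k (map ((!) w) [n..<n+k]) \<partial>A (n+k)) = h (Suc k) - h k"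
      using Ij[OF j j] I0 by simp
  qed
  finally show "(\<integral>w. Phi n k w \<partial>A (n+k)) = h (n+k) - h k - real n * (h (Suc k) - h k)" by simp
qed

end



lemma prod_list_take_map: "n \<le> length w \<Longrightarrow> prod_list (map f (take n w)) = (\<Prod>j<n. f (w ! j))"
  by (subst prod.list_conv_set_nth) (simp add: atLeast0LessThan min_def)

context core begin

lemma psi_eq:
  assumes n1: "1 \<le> n" and nk: "n + k \<le> m" and w: "w \<in> set_pmf (A (n+k))"
  shows "pmf (grp n k (drop n w)) (take n w) > 0"
    and "pmf (replicate_pmf n (gl k (drop n w))) (take n w) > 0"
    and "ln (pmf (grp n k (drop n w)) (take n w) / pmf (replicate_pmf n (gl k (drop n w))) (take n w)) = Phi n k w"
proof -
  have lw: "length w = n + k" using len[OF nk w] .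
  define c where "c = drop n w"
  have k: "k \<le> m" "Suc k \<le> m" using nk n1 by auto
  have cm: "map ((!) w) [n..<n+k] = c" unfolding c_def using map_nth_upt2[OF lw] .
  have d0: "distinct [n..<n+k]" "set [n..<n+k] \<subseteq> {..<n+k}" by auto
  have cs: "c \<in> set_pmf (A k)" using sel_supp[OF w d0 nk] cm by simp
  have sjm: "map ((!) w) (j # [n..<n+k]) = (w ! j) # c" for j using cm by simp
  have ss: "(w ! j) # c \<in> set_pmf (A (Suc k))" if j: "j < n" for j
  proof -
    have "distinct (j # [n..<n+k])" "set (j # [n..<n+k]) \<subseteq> {..<n+k}" using j by auto
    from sel_supp[OF w this nk] show ?thesis using sjm[of j] by simp
  qed
  note Pc = supp_pos[OF k(1) cs] and Pw = supp_pos[OF nk w]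
  note Ps = supp_pos[OF k(2) ss]
  have glj: "pmf (gl k c) (w ! j) = pmf (A (Suc k)) ((w ! j) # c) / pmf (A k) c" for j
    using gl_pmf(1)[OF k(2) cs] .
  have grpv: "pmf (grp n k c) (take n w) = pmf (A (n+k)) w / pmf (A k) c"
    unfolding c_def by (rule grp_pmf(1)[OF nk w])
  have repv: "pmf (replicate_pmf n (gl k c)) (take n w) = (\<Prod>j<n. pmf (A (Suc k)) ((w ! j) # c) / pmf (A k) c)"
    using lw by (simp add: pmf_replicate prod_list_take_map glj)
  show "pmf (grp n k (drop n w)) (take n w) > 0" using grpv Pw Pc unfolding c_def by simp
  show "pmf (replicate_pmf n (gl k (drop n w))) (take n w) > 0"
    using repv Ps Pc unfolding c_def[symmetric] by (auto intro!: prod_pos)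
  have Rj: "R (w ! j) > 0" "PR ((w ! j) # c) = R (w ! j) * PR c" if j: "j < n" for j
  proof -
    show e: "PR ((w ! j) # c) = R (w ! j) * PR c" by (simp add: PR_def)
    show "R (w ! j) > 0" using Ps(3)[OF j] Pc(3) e Rnn[of "w ! j"]
      by (metis mult_eq_0_iff order_neq_le_trans zero_less_mult_iff)
  qed
  have PRw: "PR w = (\<Prod>j<n. R (w ! j)) * PR c"
  proof -
    have "w = take n w @ c" unfolding c_def by simp
    then have "PR w = PR (take n w) * PR c" by (metis PR_def map_append prod_list.append)
    then show ?thesis using lw by (simp add: PR_def prod_list_take_map)
  qed
  have lnPRw: "ln (PR w) = (\<Sum>j<n. ln (R (w ! j))) + ln (PR c)"
  proof -
    have pr: "(\<Prod>j<n. R (w ! j)) > 0" by (rule prod_pos) (use Rj(1) in auto)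
    have lp: "ln (\<Prod>j<n. R (w ! j)) = (\<Sum>j<n. ln (R (w ! j)))"
      by (rule ln_prod) (use Rj(1) in \<open>auto simp: less_imp_neq[symmetric]\<close>)
    show ?thesis unfolding PRw ln_mult_pos[OF pr Pc(3)] lp ..
  qed
  have Lw: "Lf (n+k) w = ln (pmf (A (n+k)) w) - (\<Sum>j<n. ln (R (w ! j))) - ln (PR c)"
    using Lf_eq[OF nk w] lnPRw by simp
  have Lc: "Lf k c = ln (pmf (A k) c) - ln (PR c)" using Lf_eq[OF k(1) cs] .
  have Ls: "Lf (Suc k) ((w ! j) # c) = ln (pmf (A (Suc k)) ((w ! j) # c)) - ln (R (w ! j)) - ln (PR c)"
    if j: "j < n" for j
    using Lf_eq[OF k(2) ss[OF j]] Rj[OF j] Pc(3) by (simp add: ln_mult)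
  have "Phi n k w = ln (pmf (A (n+k)) w) - (\<Sum>j<n. ln (R (w ! j))) - ln (PR c) - (ln (pmf (A k) c) - ln (PR c))
      - (\<Sum>j<n. (ln (pmf (A (Suc k)) ((w ! j) # c)) - ln (R (w ! j)) - ln (PR c)) - (ln (pmf (A k) c) - ln (PR c)))"
    unfolding Phi_def cm sjm Lw Lc using Ls by (intro arg_cong2[where f="(-)"] refl sum.cong) auto
  also have "\<dots> = ln (pmf (A (n+k)) w) - ln (pmf (A k) c) - (\<Sum>j<n. ln (pmf (A (Suc k)) ((w ! j) # c)) - ln (pmf (A k) c))"
    by (simp add: sum_subtractf sum.distrib algebra_simps)
  also have "\<dots> = ln (pmf (grp n k c) (take n w) / pmf (replicate_pmf n (gl k c)) (take n w))"
  proof -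
    have "ln (\<Prod>j<n. pmf (A (Suc k)) ((w ! j) # c) / pmf (A k) c) = (\<Sum>j<n. ln (pmf (A (Suc k)) ((w ! j) # c) / pmf (A k) c))"
    proof (rule ln_prod)
      fix j assume "j \<in> {..<n}"
      then show "pmf (A (Suc k)) (w ! j # c) / pmf (A k) c \<noteq> 0" using Ps(1)[of j] Pc(1) by simp
    qed simp
    also have "\<dots> = (\<Sum>j<n. ln (pmf (A (Suc k)) ((w ! j) # c)) - ln (pmf (A k) c))"
    proof (intro sum.cong refl)
      fix j assume "j \<in> {..<n}"
      then show "ln (pmf (A (Suc k)) (w ! j # c) / pmf (A k) c) = ln (pmf (A (Suc k)) (w ! j # c)) - ln (pmf (A k) c)"
        using Ps(1)[of j] Pc(1) by (simp add: ln_div)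
    qed
    finally have lp: "ln (\<Prod>j<n. pmf (A (Suc k)) ((w ! j) # c) / pmf (A k) c) = (\<Sum>j<n. ln (pmf (A (Suc k)) ((w ! j) # c)) - ln (pmf (A k) c))" .
    have pp: "(\<Prod>j<n. pmf (A (Suc k)) ((w ! j) # c) / pmf (A k) c) > 0" using Ps Pc by (auto intro!: prod_pos)
    have xx: "pmf (A (n+k)) w / pmf (A k) c > 0" using Pw Pc by simp
    show ?thesis unfolding grpv repv ln_divide_pos[OF xx pp] ln_divide_pos[OF Pw(1) Pc(1)] lp ..
  qed
  finally show "ln (pmf (grp n k (drop n w)) (take n w) / pmf (replicate_pmf n (gl k (drop n w))) (take n w)) = Phi n k w"
    unfolding c_def by simp
qed

end



lemma tv_bdd: "bdd_above (range (\<lambda>A. \<bar>measure_pmf.prob p A - measure_pmf.prob q A\<bar>))"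
proof (rule bdd_aboveI[where M=1])
  fix x assume "x \<in> range (\<lambda>A. \<bar>measure_pmf.prob p A - measure_pmf.prob q A\<bar>)"
  then obtain A where "x = \<bar>measure_pmf.prob p A - measure_pmf.prob q A\<bar>" by auto
  moreover have "0 \<le> measure_pmf.prob p A" "measure_pmf.prob p A \<le> 1"
    "0 \<le> measure_pmf.prob q A" "measure_pmf.prob q A \<le> 1" by auto
  ultimately show "x \<le> 1" by linarith
qed

lemma tv_bounds: "0 \<le> tv_dist p q" "tv_dist p q \<le> 1"
proof -
  show "0 \<le> tv_dist p q" unfolding tv_dist_def
    by (rule cSUP_upper2[OF tv_bdd, of "{}"]) auto
  show "tv_dist p q \<le> 1" unfolding tv_dist_def
  proof (rule cSUP_least)
    fix A
    have "0 \<le> measure_pmf.prob p A" "measure_pmf.prob p A \<le> 1"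
      "0 \<le> measure_pmf.prob q A" "measure_pmf.prob q A \<le> 1" by auto
    then show "\<bar>measure_pmf.prob p A - measure_pmf.prob q A\<bar> \<le> 1" by linarith
  qed simp
qed

context core begin

lemma main_bound:
  assumes n1: "1 \<le> n" and nk: "n + k \<le> m" and tau: "\<tau> > 0"
  shows "(\<integral>y. tv_dist (grp n k (snd y)) (replicate_pmf n (gl k (snd y)))
            \<partial>map_pmf (\<lambda>w. (take n w, drop n w)) (A (n+k)))
         \<le> ((h (n+k) - h k - real n * (h (Suc k) - h k)) / 2 + \<tau>^2) / (2*\<tau>)"
proof -
  define f where "f = (\<lambda>w::'a list. (take n w, drop n w))"
  define G where "G = map_pmf f (A (n+k))"
  have k: "k \<le> m" using nk by simp
  have dx: "drop n x = map ((!) x) [n..<n+k]" if x: "x \<in> set_pmf (A (n+k))" for x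
    using map_nth_upt2[OF len[OF nk x]] by simp
  have sndG: "map_pmf snd G = A k"
  proof -
    have "map_pmf snd G = map_pmf (\<lambda>w. map ((!) w) [n..<n+k]) (A (n+k))"
      unfolding G_def f_def map_pmf_comp
      by (intro map_pmf_cong refl) (simp add: dx)
    also have "\<dots> = A k" using sel[of "[n..<n+k]" "n+k"] nk by (simp add: subset_eq)
    finally show ?thesis .
  qed
  have condG: "cond_pmf G {y. snd y = c} = map_pmf (\<lambda>s. (s, c)) (grp n k c)" if c: "c \<in> set_pmf (A k)" for c
  proof -
    have "c \<in> set_pmf (map_pmf snd G)" using c sndG by simp
    then obtain w where w: "w \<in> set_pmf (A (n+k))" "drop n w = c" unfolding G_def f_def by auto
    have ne: "set_pmf (A (n+k)) \<inter> f -` {y. snd y = c} \<noteq> {}" using w unfolding f_def by auto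
    have pre: "f -` {y. snd y = c} = {w. drop n w = c}" unfolding f_def by auto
    have ne2: "set_pmf (A (n+k)) \<inter> {w. drop n w = c} \<noteq> {}" using w by auto
    have "cond_pmf G {y. snd y = c} = map_pmf f (cond_pmf (A (n+k)) {w. drop n w = c})"
      unfolding G_def cond_map_pmf[OF ne] pre ..
    also have "\<dots> = map_pmf (\<lambda>s. (s, c)) (grp n k c)"
      unfolding grp_def map_pmf_comp f_def
      by (intro map_pmf_cong refl) (use set_cond_pmf[OF ne2] in auto)
    finally show ?thesis .
  qed
  have tower: "G = bind_pmf (A k) (\<lambda>c. cond_pmf G {y. snd y = c})"
  proof -
    have "bind_pmf (map_pmf snd G) (\<lambda>c. cond_pmf G {y. snd y = c}) = G"
    proof (rule bind_cond_pmf_cancel)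
      fix x assume "x \<in> set_pmf (map_pmf snd G)"
      then show "set_pmf G \<inter> {y. snd y = x} \<noteq> {}" by auto
    next
      fix y assume "y \<in> set_pmf G"
      then show "set_pmf (map_pmf snd G) \<inter> {x. snd y = x} \<noteq> {}" by auto
    next
      fix x y assume "x \<in> set_pmf (map_pmf snd G)" "y \<in> set_pmf G" "snd y = x"
      then show "measure_pmf.prob G {y. snd y = x} = measure_pmf.prob (map_pmf snd G) {x. snd y = x}"
        by (simp add: measure_map_pmf vimage_def eq_commute)
    qed
    then show ?thesis using sndG by simp
  qed
  define psi where "psi = (\<lambda>y. ln (pmf (grp n k (snd y)) (fst y) / pmf (replicate_pmf n (gl k (snd y))) (fst y)))"
  have psiPhi: "AE w in A (n+k). psi (f w) = Phi n k w"
    using psi_eq(3)[OF n1 nk] unfolding psi_def f_def by (simp add: AE_measure_pmf_iff)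
  have int_psi: "integrable G psi"
  proof -
    have "integrable (A (n+k)) (\<lambda>w. psi (f w))"
      by (rule integrable_cong_AE_imp[OF Phi_int(1)[OF nk]]) (use psiPhi in \<open>auto simp: AE_measure_pmf_iff\<close>)
    then show ?thesis unfolding G_def by simp
  qed
  have E_psi: "(\<integral>y. psi y \<partial>G) = h (n+k) - h k - real n * (h (Suc k) - h k)"
  proof -
    have "(\<integral>y. psi y \<partial>G) = (\<integral>w. psi (f w) \<partial>A (n+k))" unfolding G_def by simp
    also have "\<dots> = (\<integral>w. Phi n k w \<partial>A (n+k))" by (rule integral_cong_AE) (use psiPhi in auto)
    finally show ?thesis using Phi_int(2)[OF nk] by simp
  qed
  define KL where "KL = (\<lambda>c. \<integral>y. psi y \<partial>cond_pmf G {y. snd y = c})"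
  have int_psi': "integrable (bind_pmf (A k) (\<lambda>c. cond_pmf G {y. snd y = c})) psi"
    using int_psi tower by simp
  note T = tower_pmf[OF int_psi']
  have KL_int: "integrable (A k) KL" using T(1) unfolding KL_def .
  have E_KL: "(\<integral>c. KL c \<partial>A k) = h (n+k) - h k - real n * (h (Suc k) - h k)"
    using T(2) E_psi tower unfolding KL_def by simp
  have pw: "tv_dist (grp n k c) (replicate_pmf n (gl k c)) \<le> (KL c / 2 + \<tau>^2) / (2*\<tau>)"
    if c: "c \<in> set_pmf (A k)" for c
  proof -
    let ?p = "grp n k c" and ?q = "replicate_pmf n (gl k c)"
    have i1: "integrable (cond_pmf G {y. snd y = c}) psi" by (rule tower_int[OF int_psi' c])
    have i2: "integrable ?p (\<lambda>s. ln (pmf ?p s / pmf ?q s))"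
      using i1 unfolding condG[OF c] psi_def by simp
    have KLc: "KL c = (\<integral>s. ln (pmf ?p s / pmf ?q s) \<partial>?p)"
      unfolding KL_def condG[OF c] psi_def by simp
    have pos: "pmf ?q s > 0" if s: "s \<in> set_pmf ?p" for s
    proof -
      have ne2: "set_pmf (A (n+k)) \<inter> {w. drop n w = c} \<noteq> {}"
      proof -
        have "c \<in> set_pmf (map_pmf snd G)" using c sndG by simp
        then show ?thesis unfolding G_def f_def by auto
      qed
      obtain w where w: "w \<in> set_pmf (A (n+k))" "drop n w = c" "s = take n w"
        using s set_cond_pmf[OF ne2] unfolding grp_def by auto
      show ?thesis using psi_eq(2)[OF n1 nk w(1)] w by simp
    qed
    have pins: "tv_dist ?p ?q \<le> sqrt (KL c / 2)" using pinsker_pmf[OF pos i2] KLc by simp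
    have kl0: "0 \<le> KL c" using gibbs_pmf[OF pos i2] KLc by simp
    have "sqrt (KL c / 2) \<le> (KL c / 2 + \<tau>^2) / (2*\<tau>)" by (rule sqrt_le_am) (use kl0 tau in auto)
    then show ?thesis using pins by simp
  qed
  have "(\<integral>y. tv_dist (grp n k (snd y)) (replicate_pmf n (gl k (snd y))) \<partial>G)
      = (\<integral>c. tv_dist (grp n k c) (replicate_pmf n (gl k c)) \<partial>map_pmf snd G)" by simp
  also have "\<dots> = (\<integral>c. tv_dist (grp n k c) (replicate_pmf n (gl k c)) \<partial>A k)" unfolding sndG ..
  also have "\<dots> \<le> (\<integral>c. (KL c / 2 + \<tau>^2) / (2*\<tau>) \<partial>A k)"
  proof (rule integral_mono_AE)
    show "integrable (A k) (\<lambda>c. tv_dist (grp n k c) (replicate_pmf n (gl k c)))"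
      by (rule measure_pmf.integrable_const_bound[where B=1]) (auto simp: tv_bounds abs_le_iff intro: order_trans[OF _ tv_bounds(2)])
    show "integrable (A k) (\<lambda>c. (KL c / 2 + \<tau>^2) / (2*\<tau>))" using KL_int by simp
    show "AE c in A k. tv_dist (grp n k c) (replicate_pmf n (gl k c)) \<le> (KL c / 2 + \<tau>^2) / (2*\<tau>)"
      using pw by (simp add: AE_measure_pmf_iff)
  qed
  also have "\<dots> = ((\<integral>c. KL c \<partial>A k) / 2 + \<tau>^2) / (2*\<tau>)" using KL_int by simp
  finally show ?thesis unfolding G_def f_def E_KL .
qed

end



lemma choose_k:
  fixes h :: "nat \<Rightarrow> real" and m n K :: nat and c0 :: real
  assumes h0: "h 0 = 0" and hle: "\<And>t. t \<le> m \<Longrightarrow> h t \<le> 0" and h1: "- c0 \<le> h 1" and c0: "c0 \<ge> 0"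
    and cvx: "\<And>t. Suc (Suc t) \<le> m \<Longrightarrow> 2 * h (Suc t) \<le> h t + h (Suc (Suc t))"
    and n1: "1 \<le> n" and K1: "1 \<le> K" and mK: "2 * (n + K) \<le> m"
  shows "\<exists>k\<le>K. h (n+k) - h k - real n * (h (Suc k) - h k) \<le> real n ^ 2 * c0 / real K"
proof (rule ccontr)
  assume neg: "\<not> ?thesis"
  define D where "D = (\<lambda>t. h (Suc t) - h t)"
  have Dstep: "D t \<le> D (Suc t)" if "Suc (Suc t) \<le> m" for t
    using cvx[OF that] unfolding D_def by simp
  have mono: "D i \<le> D j" if "i \<le> j" "Suc j \<le> m" for i j
    using that
  proof (induction j rule: dec_induct)
    case base then show ?case by simp
  next
    case (step j)
    then have "D i \<le> D j" by simp
    also have "D j \<le> D (Suc j)" using step by (intro Dstep) simp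
    finally show ?case .
  qed
  have tele: "h (a + b) - h a = (\<Sum>i<b. D (a + i))" for a b
    by (induction b) (auto simp: D_def)
  define g where "g = (\<lambda>k. h (n+k) - h k - real n * (h (Suc k) - h k))"
  have gsum: "g k = (\<Sum>j<n. D (k + j) - D k)" for k
    unfolding g_def using tele[of k n] by (simp add: sum_subtractf D_def add.commute)
  define T where "T = K + n - 1"
  define F where "F = D T - D 0"
  have T1: "Suc T \<le> m" unfolding T_def using mK n1 by simp
  define S where "S = (\<lambda>j. \<Sum>k\<le>K. D (k + j) - D k)"
  have Sstep: "S (Suc j) = S j + (D (K + Suc j) - D j)" for j
  proof -
    have "S (Suc j) - S j = (\<Sum>k\<le>K. D (Suc k + j) - D (k + j))"
      unfolding S_def by (simp add: sum_subtractf[symmetric] algebra_simps)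
    also have "\<dots> = D (Suc K + j) - D (0 + j)"
    proof -
      have "(\<Sum>k\<le>K'. D (Suc k + j) - D (k + j)) = D (Suc K' + j) - D (0 + j)" for K'
        by (induction K') auto
      then show ?thesis .
    qed
    finally show ?thesis by simp
  qed
  have Sle: "S j \<le> real j * F" if "j < n" for j
    using that
  proof (induction j)
    case 0 then show ?case by (simp add: S_def)
  next
    case (Suc j)
    have "D (K + Suc j) \<le> D T" using Suc.prems T1 unfolding T_def by (intro mono) auto
    moreover have "D 0 \<le> D j" using Suc.prems T1 unfolding T_def by (intro mono) auto
    ultimately show ?case using Suc Sstep[of j] unfolding F_def by (simp add: algebra_simps)
  qed
  have md: "D 0 \<le> D t" if "Suc t \<le> m" for t using mono[of 0 t] that by simp
  have sumg: "(\<Sum>k\<le>K. g k) = (\<Sum>j<n. S j)"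
    unfolding gsum S_def by (rule sum.swap)
  have "(\<Sum>j<n. S j) \<le> (\<Sum>j<n. real j * F)" using Sle by (intro sum_mono) auto
  also have "\<dots> = F * (\<Sum>j<n. real j)" by (simp add: sum_distrib_left mult.commute)
  also have "(\<Sum>j<n. real j) = real n * (real n - 1) / 2"
  proof -
    have "(\<Sum>j<N. real j) = real N * (real N - 1) / 2" for N
      by (induction N) (simp_all add: field_simps)
    then show ?thesis .
  qed
  finally have sg: "(\<Sum>k\<le>K. g k) \<le> F * (real n * (real n - 1) / 2)" using sumg by simp
  have tot: "(\<Sum>t<m. D t - D 0) = h m - real m * h 1"
    using tele[of 0 m] h0 by (simp add: sum_subtractf D_def)
  have "(\<Sum>t<m. D t - D 0) = (\<Sum>t\<in>{0..<T}. D t - D 0) + (\<Sum>t\<in>{T..<m}. D t - D 0)"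
    using T1 by (simp add: atLeast0LessThan[symmetric] sum.atLeastLessThan_concat)
  moreover have "(\<Sum>t\<in>{0..<T}. D t - D 0) \<ge> 0"
    using T1 md by (intro sum_nonneg) auto
  moreover have "(\<Sum>t\<in>{T..<m}. D t - D 0) \<ge> (\<Sum>t\<in>{T..<m}. F)"
    unfolding F_def using mono by (intro sum_mono) auto
  ultimately have "real (m - T) * F \<le> h m - real m * h 1" using tot by simp
  also have "\<dots> \<le> real m * c0"
  proof -
    have "real m * (- c0) \<le> real m * h 1" using h1 by (intro mult_left_mono) auto
    then show ?thesis using hle[of m] by simp
  qed
  finally have mF: "real (m - T) * F \<le> real m * c0" .
  have mT: "real m \<le> 2 * real (m - T)" using mK T1 unfolding T_def by simp
  have F2: "F \<le> 2 * c0"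
  proof -
    have pos: "0 < real (m - T)" using T1 by simp
    have "real m * c0 \<le> (2 * real (m - T)) * c0" using mT c0 by (rule mult_right_mono)
    then have "real (m - T) * F \<le> real (m - T) * (2 * c0)"
      using mF by simp
    then show ?thesis using pos by simp
  qed
  have A1: "(\<Sum>k\<le>K. g k) \<le> real n ^ 2 * c0"
  proof -
    have "F * (real n * (real n - 1) / 2) \<le> (2 * c0) * (real n * (real n - 1) / 2)"
      using F2 n1 by (intro mult_right_mono) auto
    also have "\<dots> \<le> real n ^ 2 * c0" using c0 by (simp add: power2_eq_square algebra_simps)
    finally show ?thesis using sg by simp
  qed
  have gt: "g k > real n ^ 2 * c0 / real K" if "k \<le> K" for k
    using neg that unfolding g_def by force
  have "(\<Sum>k\<le>K. real n ^ 2 * c0 / real K) < (\<Sum>k\<le>K. g k)"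
    using gt by (intro sum_strict_mono) auto
  moreover have "(\<Sum>k\<le>K. real n ^ 2 * c0 / real K) = real (Suc K) * (real n ^ 2 * c0 / real K)" by simp
  moreover have "real n ^ 2 * c0 \<le> real (Suc K) * (real n ^ 2 * c0 / real K)"
  proof -
    have "real n ^ 2 * c0 = real K * (real n ^ 2 * c0 / real K)" using K1 by simp
    also have "\<dots> \<le> real (Suc K) * (real n ^ 2 * c0 / real K)" using c0 by (intro mult_right_mono) auto
    finally show ?thesis .
  qed
  ultimately show False using A1 by linarith
qed




lemma rep_prod:
  "emeasure (replicate_pmf m D) {S. \<forall>i<m. S ! i \<in> C i} = (\<Prod>i<m. emeasure (measure_pmf D) (C i))"
proof (induction m arbitrary: C)
  case 0 then show ?case by (simp add: measure_pmf.emeasure_space_1[simplified])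
next
  case (Suc m)
  have rep: "replicate_pmf (Suc m) D = bind_pmf D (\<lambda>x. map_pmf (Cons x) (replicate_pmf m D))"
    by (simp add: map_pmf_def)
  have pre: "Cons x -` {S. \<forall>i<Suc m. S ! i \<in> C i} = (if x \<in> C 0 then {S. \<forall>i<m. S ! i \<in> C (Suc i)} else {})" for x
    by (auto simp: All_less_Suc2)
  have "emeasure (replicate_pmf (Suc m) D) {S. \<forall>i<Suc m. S ! i \<in> C i}
      = (\<integral>\<^sup>+x. emeasure (replicate_pmf m D) {S. \<forall>i<m. S ! i \<in> C (Suc i)} * indicator (C 0) x \<partial>D)"
    unfolding rep emeasure_bind_pmf emeasure_map_pmf pre
    by (intro nn_integral_cong) (auto simp: indicator_def)
  also have "\<dots> = emeasure (replicate_pmf m D) {S. \<forall>i<m. S ! i \<in> C (Suc i)} * emeasure D (C 0)"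
    by (rule nn_integral_cmult_indicator) simp
  also have "\<dots> = (\<Prod>i<Suc m. emeasure (measure_pmf D) (C i))"
    unfolding prod.lessThan_Suc_shift using Suc.IH[of "\<lambda>i. C (Suc i)"] by (simp add: mult.commute)
  finally show ?case .
qed

lemma rep_sel_le:
  assumes xs: "distinct xs" "set xs \<subseteq> {..<m}" "length xs = t"
  shows "measure (replicate_pmf m D) {S. \<forall>j<t. S ! (xs ! j) \<in> B j} \<le> (\<Prod>j<t. measure D (B j))"
proof -
  define C where "C = (\<lambda>i. {s. \<forall>j<t. xs ! j = i \<longrightarrow> s \<in> B j})"
  have sub: "{S. \<forall>j<t. S ! (xs ! j) \<in> B j} \<subseteq> {S. \<forall>i<m. S ! i \<in> C i}"
    unfolding C_def by auto
  have CB: "C (xs ! j) = B j" if "j < t" for j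
  proof -
    have "xs ! j' = xs ! j \<longleftrightarrow> j' = j" if "j' < t" for j'
      using xs that \<open>j < t\<close> by (simp add: nth_eq_iff_index_eq)
    then show ?thesis unfolding C_def using that by auto
  qed
  have CU: "C i = UNIV" if "i \<notin> set xs" for i
    unfolding C_def using that xs by (auto simp: in_set_conv_nth)
  have "emeasure (replicate_pmf m D) {S. \<forall>j<t. S ! (xs ! j) \<in> B j} \<le> emeasure (replicate_pmf m D) {S. \<forall>i<m. S ! i \<in> C i}"
    by (rule emeasure_mono[OF sub]) simp
  also have "\<dots> = (\<Prod>i<m. emeasure (measure_pmf D) (C i))" by (rule rep_prod)
  also have "\<dots> = (\<Prod>i\<in>set xs. emeasure (measure_pmf D) (C i))"
    by (rule prod.mono_neutral_right) (use xs CU in \<open>auto simp: measure_pmf.emeasure_space_1[simplified]\<close>)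
  also have "\<dots> = (\<Prod>j<t. emeasure (measure_pmf D) (C (xs ! j)))"
  proof -
    have "set xs = (\<lambda>j. xs ! j) ` {..<t}" using xs by (auto simp: in_set_conv_nth image_iff)
    moreover have "inj_on (\<lambda>j. xs ! j) {..<t}" using xs by (auto intro!: inj_onI simp: nth_eq_iff_index_eq)
    ultimately show ?thesis by (simp add: prod.reindex)
  qed
  also have "\<dots> = (\<Prod>j<t. emeasure (measure_pmf D) (B j))" using CB by (intro prod.cong) auto
  also have "\<dots> = ennreal (\<Prod>j<t. measure D (B j))"
    by (simp add: measure_pmf.emeasure_eq_measure prod_ennreal)
  finally show ?thesis by (simp add: measure_pmf.emeasure_eq_measure prod_nonneg)
qed




context core begin

lemma condG':
  assumes nk: "n + k \<le> m" and c: "c \<in> set_pmf (A k)"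
  shows "cond_pmf (map_pmf (\<lambda>w. (take n w, drop n w)) (A (n+k))) {y. snd y = c} = map_pmf (\<lambda>s. (s, c)) (grp n k c)"
    and "set_pmf (A (n+k)) \<inter> {w. drop n w = c} \<noteq> {}"
proof -
  define f where "f = (\<lambda>w::'a list. (take n w, drop n w))"
  have dx: "drop n x = map ((!) x) [n..<n+k]" if x: "x \<in> set_pmf (A (n+k))" for x
    using map_nth_upt2[OF len[OF nk x]] by simp
  have "map_pmf (drop n) (A (n+k)) = map_pmf (\<lambda>w. map ((!) w) [n..<n+k]) (A (n+k))"
    by (intro map_pmf_cong refl) (simp add: dx)
  also have "\<dots> = A k" using sel[of "[n..<n+k]" "n+k"] nk by (simp add: subset_eq)
  finally have "c \<in> set_pmf (map_pmf (drop n) (A (n+k)))" using c by simp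
  then obtain w where w: "w \<in> set_pmf (A (n+k))" "drop n w = c" by auto
  show ne2: "set_pmf (A (n+k)) \<inter> {w. drop n w = c} \<noteq> {}" using w by auto
  have ne: "set_pmf (A (n+k)) \<inter> f -` {y. snd y = c} \<noteq> {}" using w unfolding f_def by auto
  have pre: "f -` {y. snd y = c} = {w. drop n w = c}" unfolding f_def by auto
  have "cond_pmf (map_pmf f (A (n+k))) {y. snd y = c} = map_pmf f (cond_pmf (A (n+k)) {w. drop n w = c})"
    unfolding cond_map_pmf[OF ne] pre ..
  also have "\<dots> = map_pmf (\<lambda>s. (s, c)) (grp n k c)"
    unfolding grp_def map_pmf_comp f_def
    by (intro map_pmf_cong refl) (use set_cond_pmf[OF ne2] in auto)
  finally show "cond_pmf (map_pmf (\<lambda>w. (take n w, drop n w)) (A (n+k))) {y. snd y = c} = map_pmf (\<lambda>s. (s, c)) (grp n k c)"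
    unfolding f_def .
qed

lemma goal_eq:
  assumes n1: "1 \<le> n" and nk: "n + k \<le> m" and c: "c \<in> set_pmf (A k)"
  shows "bind_pmf (grp n k c) (\<lambda>S. bind_pmf (pmf_of_set {..<length S}) (\<lambda>i. return_pmf (S ! i))) = gl k c"
proof -
  note ne2 = condG'(2)[OF nk c]
  define C where "C = cond_pmf (A (n+k)) {w. drop n w = c}"
  have setC: "set_pmf C = set_pmf (A (n+k)) \<inter> {w. drop n w = c}" unfolding C_def using set_cond_pmf[OF ne2] .
  have lenS: "length S = n" if "S \<in> set_pmf (grp n k c)" for S
    using that len[OF nk] setC unfolding grp_def C_def[symmetric] by auto
  have step1: "bind_pmf (grp n k c) (\<lambda>S. bind_pmf (pmf_of_set {..<length S}) (\<lambda>i. return_pmf (S ! i)))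
     = bind_pmf (grp n k c) (\<lambda>S. bind_pmf (pmf_of_set {..<n}) (\<lambda>i. return_pmf (S ! i)))"
    by (intro bind_pmf_cong refl) (simp add: lenS)
  also have "\<dots> = bind_pmf (pmf_of_set {..<n}) (\<lambda>i. bind_pmf (grp n k c) (\<lambda>S. return_pmf (S ! i)))"
    by (rule bind_commute_pmf)
  also have "\<dots> = bind_pmf (pmf_of_set {..<n}) (\<lambda>i. gl k c)"
  proof (intro bind_pmf_cong refl)
    fix i assume "i \<in> set_pmf (pmf_of_set {..<n})"
    then have i: "i < n" using n1 by (subst (asm) set_pmf_of_set) (auto simp: lessThan_empty_iff)
    have "bind_pmf (grp n k c) (\<lambda>S. return_pmf (S ! i)) = map_pmf (\<lambda>w. w ! i) C"
      unfolding grp_def C_def[symmetric] map_pmf_def[symmetric] map_pmf_comp using i by simp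
    also have "\<dots> = gl k c"
    proof -
      define g where "g = (\<lambda>w::'a list. map ((!) w) (i # [n..<n+k]))"
      have dg: "distinct (i # [n..<n+k])" "set (i # [n..<n+k]) \<subseteq> {..<n+k}" using i by auto
      have Ag: "map_pmf g (A (n+k)) = A (Suc k)" unfolding g_def using sel[OF dg nk] by simp
      have dx: "drop n x = map ((!) x) [n..<n+k]" if x: "x \<in> set_pmf (A (n+k))" for x
        using map_nth_upt2[OF len[OF nk x]] by simp
      have pre: "g -` {v. tl v = c} = {w. map ((!) w) [n..<n+k] = c}" unfolding g_def by auto
      have ne: "set_pmf (A (n+k)) \<inter> g -` {v. tl v = c} \<noteq> {}" using ne2 dx unfolding pre by auto
      have "cond_pmf (A (Suc k)) {v. tl v = c} = map_pmf g (cond_pmf (A (n+k)) {w. map ((!) w) [n..<n+k] = c})"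
        unfolding Ag[symmetric] cond_map_pmf[OF ne] pre ..
      also have "cond_pmf (A (n+k)) {w. map ((!) w) [n..<n+k] = c} = C"
        unfolding C_def by (rule cond_pmf_cong_supp) (use dx ne pre in auto)
      finally have "gl k c = map_pmf (\<lambda>x. hd (g x)) C" unfolding gl_def by (simp add: map_pmf_comp)
      also have "(\<lambda>x. hd (g x)) = (\<lambda>w. w ! i)" unfolding g_def by auto
      finally show ?thesis by simp
    qed
    finally show "bind_pmf (grp n k c) (\<lambda>S. return_pmf (S ! i)) = gl k c" .
  qed
  also have "\<dots> = gl k c" by simp
  finally show ?thesis .
qed

end



lemma prod_list_mono_nn:
  fixes f g :: "'a \<Rightarrow> real"
  assumes "\<And>x. 0 \<le> f x" "\<And>x. f x \<le> g x"
  shows "prod_list (map f w) \<le> prod_list (map g w)"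
proof (induction w)
  case Nil then show ?case by simp
next
  case (Cons a w)
  have "0 \<le> prod_list (map f w)" using assms(1) by (induction w) auto
  then show ?case using Cons assms by (auto intro!: mult_mono order_trans[OF assms(1) assms(2)])
qed

theorem mainTheorem3:
  fixes D :: "'a :: countable pmf" and \<rho> :: "'a \<Rightarrow> 'a \<Rightarrow> ennreal"
    and d m n kmax :: nat and \<mu> :: "'a list pmf"
  assumes "is_cost \<rho>"
    and "cost_degree \<rho> = enat d" and "d \<ge> 1"
    and "m \<ge> 1" and "n \<ge> 1" and "kmax \<ge> 1"
    and "real (n + kmax) \<le> real m / 2"
    and "\<mu> \<in> adaptive m \<rho> D"
  shows "\<exists>k \<le> kmax.
     measure_pmf.expectation (grouped m n k \<mu>)
        (\<lambda>(S, c). tv_dist (group m n \<mu> c) (replicate_pmf n (D_goal m n \<mu> c)))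
     \<le> sqrt (real n ^ 2 * ln (real d) / (2 * real kmax))"
proof -
  note cost = assms(1) and deg = assms(2) and d1 = assms(3) and m1 = assms(4) and n1 = assms(5)
    and K1 = assms(6) and mK0 = assms(7) and adv = assms(8)
  obtain \<nu> where nu1: "map_pmf fst \<nu> = \<mu>" and nu2: "map_pmf snd \<nu> = replicate_pmf m D"
    and nu3: "\<forall>(S', S) \<in> set_pmf \<nu>. S' \<in> cost_ball \<rho> S"
    using adv unfolding adaptive_def by auto
  have nuP: "length S = m \<and> length Y = m \<and> (\<forall>i<m. \<rho> (S ! i) (Y ! i) \<noteq> \<top>)"
    if YS: "(Y, S) \<in> set_pmf \<nu>" for Y S
  proof -
    have "S \<in> set_pmf (map_pmf snd \<nu>)" using YS by force
    then have lS: "length S = m" unfolding nu2 by (simp add: set_replicate_pmf)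
    have cb: "Y \<in> cost_ball \<rho> S" using nu3 YS by auto
    then have lY: "length Y = m" using lS unfolding cost_ball_def by simp
    have sm: "(\<Sum>i<m. \<rho> (S ! i) (Y ! i)) / of_nat m \<le> 1" using cb lS unfolding cost_ball_def by simp
    have fin: "\<rho> (S ! i) (Y ! i) \<noteq> \<top>" if i: "i < m" for i
    proof
      assume top: "\<rho> (S ! i) (Y ! i) = \<top>"
      have "\<rho> (S ! i) (Y ! i) \<le> (\<Sum>i<m. \<rho> (S ! i) (Y ! i))"
        by (rule member_le_sum) (use i in auto)
      then have "(\<Sum>i<m. \<rho> (S ! i) (Y ! i)) = \<top>" using top by (simp add: top_unique)
      then have "(\<Sum>i<m. \<rho> (S ! i) (Y ! i)) / of_nat m = \<top>"
        by (simp add: ennreal_divide_eq_top_iff)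
      then show False using sm by (simp add: top_unique)
    qed
    show ?thesis using lS lY fin by auto
  qed
  have len\<mu>: "length Y = m" if "Y \<in> set_pmf \<mu>" for Y
  proof -
    have "Y \<in> set_pmf (map_pmf fst \<nu>)" using that nu1 by simp
    then obtain S where "(Y, S) \<in> set_pmf \<nu>" by force
    then show ?thesis using nuP by blast
  qed
  define N where "N = (\<lambda>s. {y. \<rho> s y \<noteq> \<top>})"
  have Nfin: "finite (N s)" and Ncard: "card (N s) \<le> d" for s
  proof -
    have eqN: "{y. \<rho> s y \<noteq> \<infinity>} = N s" by (simp add: N_def)
    have "(if finite (N s) then enat (card (N s)) else \<infinity>) \<le> cost_degree \<rho>"
      unfolding cost_degree_def eqN[symmetric] by (rule SUP_upper) simp
    then have le: "(if finite (N s) then enat (card (N s)) else \<infinity>) \<le> enat d"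
      using deg by simp
    show "finite (N s)" using le by (cases "finite (N s)") auto
    show "card (N s) \<le> d" using le by (cases "finite (N s)") auto
  qed
  have Nin: "s \<in> N s" for s using cost unfolding N_def is_cost_def by simp
  have Nne: "N s \<noteq> {}" for s using Nin by auto
  define Z where "Z = bind_pmf D (\<lambda>s. pmf_of_set (N s))"
  define R0 where "R0 = (\<lambda>x. measure D {s. \<rho> s x \<noteq> \<top>})"
  have dpos: "real d > 0" using d1 by simp
  have R0Z: "R0 x \<le> real d * pmf Z x" for x
  proof -
    have pz: "pmf Z x = (\<integral>s. indicator (N s) x / real (card (N s)) \<partial>D)"
      unfolding Z_def pmf_bind using Nfin Nne by simp
    have i1: "integrable D (\<lambda>s. indicator (N s) x / real d)"
      by (rule measure_pmf.integrable_const_bound[where B=1]) (use dpos d1 in \<open>auto simp: indicator_def\<close>)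
    have i2: "integrable D (\<lambda>s. indicator (N s) x / real (card (N s)))"
      by (rule measure_pmf.integrable_const_bound[where B=1])
         (auto simp: indicator_def Nfin Nne card_gt_0_iff Suc_le_eq)
    have "(\<integral>s. indicator (N s) x / real d \<partial>D) \<le> (\<integral>s. indicator (N s) x / real (card (N s)) \<partial>D)"
    proof (rule integral_mono[OF i1 i2])
      fix s
      have c0: "real (card (N s)) > 0" using Nfin Nne by (simp add: card_gt_0_iff)
      have "real (card (N s)) \<le> real d" using Ncard by simp
      then have "1 / real d \<le> 1 / real (card (N s))" using c0 by (intro divide_left_mono) auto
      then show "indicator (N s) x / real d \<le> indicator (N s) x / real (card (N s))"
        by (auto simp: indicator_def)
    qed
    moreover have "(\<integral>s. indicator (N s) x / real d \<partial>D) = R0 x / real d"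
    proof -
      have e: "(\<lambda>s. indicator (N s) x / real d :: real) = (\<lambda>s. indicator {s. \<rho> s x \<noteq> \<top>} s / real d)"
        unfolding N_def by (auto simp: indicator_def)
      show ?thesis unfolding e R0_def by simp
    qed
    ultimately have "R0 x / real d \<le> pmf Z x" using pz d1 by simp
    then show ?thesis using dpos by (simp add: field_simps)
  qed
  have R0nn: "0 \<le> R0 x" for x unfolding R0_def by simp
  have domA: "pmf (Apmf m \<mu> t) w \<le> prod_list (map (\<lambda>x. real d * pmf Z x) w)" if t: "t \<le> m" for t w
  proof -
    have A_eq: "Apmf m \<mu> t = bind_pmf (U m t) (\<lambda>xs. map_pmf (\<lambda>Y. map ((!) Y) xs) \<mu>)"
      unfolding Apmf_def map_pmf_def by (rule bind_commute_pmf)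
    have pt: "pmf (map_pmf (\<lambda>Y. map ((!) Y) xs) \<mu>) w \<le> prod_list (map R0 w)"
      if xs: "xs \<in> set_pmf (U m t)" for xs
    proof -
      have xs': "distinct xs" "length xs = t" "set xs \<subseteq> {..<m}" using xs set_U[OF t] unfolding DL_def by auto
      show ?thesis
      proof (cases "length w = t")
        case False
        have "pmf (map_pmf (\<lambda>Y. map ((!) Y) xs) \<mu>) w = 0"
          using False xs' by (intro pmf_map_outside) auto
        moreover have "0 \<le> prod_list (map R0 w)" using R0nn by (induction w) auto
        ultimately show ?thesis by simp
      next
        case True
        define B where "B = (\<lambda>j. {s. \<rho> s (w ! j) \<noteq> \<top>})"
        have "pmf (map_pmf (\<lambda>Y. map ((!) Y) xs) \<mu>) w = measure \<nu> ((\<lambda>p. map ((!) (fst p)) xs) -` {w})"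
          unfolding nu1[symmetric] by (simp add: pmf_map vimage_def)
        also have "\<dots> = measure \<nu> ((\<lambda>p. map ((!) (fst p)) xs) -` {w} \<inter> set_pmf \<nu>)"
          by (simp add: measure_Int_set_pmf)
        also have "\<dots> \<le> measure \<nu> (snd -` {S. \<forall>j<t. S ! (xs ! j) \<in> B j})"
        proof (rule measure_pmf.finite_measure_mono)
          show "(\<lambda>p. map ((!) (fst p)) xs) -` {w} \<inter> set_pmf \<nu> \<subseteq> snd -` {S. \<forall>j<t. S ! (xs ! j) \<in> B j}"
          proof
            fix p assume p: "p \<in> (\<lambda>p. map ((!) (fst p)) xs) -` {w} \<inter> set_pmf \<nu>"
            obtain Y S where YS: "p = (Y, S)" by (cases p)
            have a1: "map ((!) Y) xs = w" and a2: "(Y, S) \<in> set_pmf \<nu>" using p YS by auto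
            have "S ! (xs ! j) \<in> B j" if j: "j < t" for j
            proof -
              have xj: "xs ! j < m" using xs' j by (auto simp: subset_eq)
              have "Y ! (xs ! j) = w ! j" using a1 j xs' by auto
              then show ?thesis unfolding B_def using nuP[OF a2] xj by auto
            qed
            then show "p \<in> snd -` {S. \<forall>j<t. S ! (xs ! j) \<in> B j}" using YS by simp
          qed
        qed simp
        also have "\<dots> = measure (replicate_pmf m D) {S. \<forall>j<t. S ! (xs ! j) \<in> B j}"
          unfolding nu2[symmetric] by simp
        also have "\<dots> \<le> (\<Prod>j<t. measure D (B j))" by (rule rep_sel_le) (use xs' in auto)
        also have "\<dots> = prod_list (map R0 w)"
          using prod_list_take_map[of "length w" w R0] True unfolding R0_def B_def by simp
        finally show ?thesis .
      qed
    qed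
    have "pmf (Apmf m \<mu> t) w = (\<integral>xs. pmf (map_pmf (\<lambda>Y. map ((!) Y) xs) \<mu>) w \<partial>U m t)"
      unfolding A_eq pmf_bind ..
    also have "\<dots> \<le> (\<integral>xs. prod_list (map R0 w) \<partial>U m t)"
      by (rule integral_mono_AE)
         (auto simp: AE_measure_pmf_iff pt intro!: measure_pmf.integrable_const_bound[where B=1] pmf_le_1)
    also have "\<dots> = prod_list (map R0 w)" by simp
    also have "\<dots> \<le> prod_list (map (\<lambda>x. real d * pmf Z x) w)"
      by (rule prod_list_mono_nn[OF R0nn R0Z])
    finally show ?thesis .
  qed
  interpret C: core "Apmf m \<mu>" m "\<lambda>x. real d * pmf Z x" "real d" Z
  proof
    show "\<And>t w. t \<le> m \<Longrightarrow> w \<in> set_pmf (Apmf m \<mu> t) \<Longrightarrow> length w = t" by (rule set_Apmf)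
    show "\<And>ps L. distinct ps \<Longrightarrow> set ps \<subseteq> {..<L} \<Longrightarrow> L \<le> m \<Longrightarrow>
             map_pmf (\<lambda>w. map ((!) w) ps) (Apmf m \<mu> L) = Apmf m \<mu> (length ps)"
      by (rule Apmf_sel[OF len\<mu>])
    show "Apmf m \<mu> 0 = return_pmf []" by (rule Apmf_0)
    show "\<And>t w. t \<le> m \<Longrightarrow> pmf (Apmf m \<mu> t) w \<le> prod_list (map (\<lambda>x. real d * pmf Z x) w)" by (rule domA)
    show "\<And>x. 0 \<le> real d * pmf Z x" by simp
    show "0 < real d" by (rule dpos)
    show "\<And>x. pmf Z x = real d * pmf Z x / real d" using dpos by simp
  qed
  have "real (2 * (n + kmax)) \<le> real m" using mK0 by simp
  then have mK: "2 * (n + kmax) \<le> m" by (simp only: of_nat_le_iff)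
  have lnd: "0 \<le> ln (real d)" using d1 by simp
  obtain k where k: "k \<le> kmax"
    and gk: "C.h (n+k) - C.h k - real n * (C.h (Suc k) - C.h k) \<le> real n ^ 2 * ln (real d) / real kmax"
    using choose_k[of C.h m "ln (real d)" n kmax, OF C.h0 C.h_le0 _ lnd C.h_convex n1 K1 mK]
          C.h1_ge[OF m1] by auto
  have nk: "n + k \<le> m" using k mK by simp
  define G where "G = map_pmf (\<lambda>w. (take n w, drop n w)) (Apmf m \<mu> (n+k))"
  have gr: "grouped m n k \<mu> = G" unfolding G_def by (rule grouped_Apmf)
  have supp: "snd y \<in> set_pmf (Apmf m \<mu> k) \<and> length (snd y) = k" if y: "y \<in> set_pmf G" for y
  proof -
    obtain w where w: "w \<in> set_pmf (Apmf m \<mu> (n+k))" "y = (take n w, drop n w)" using y unfolding G_def by auto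
    have "distinct [n..<n+k]" "set [n..<n+k] \<subseteq> {..<n+k}" by auto
    from C.sel_supp[OF w(1) this nk] have "map ((!) w) [n..<n+k] \<in> set_pmf (Apmf m \<mu> k)" by simp
    moreover have "map ((!) w) [n..<n+k] = drop n w" by (rule map_nth_upt2[OF C.len[OF nk w(1)]])
    ultimately have "snd y \<in> set_pmf (Apmf m \<mu> k)" using w by simp
    moreover have "k \<le> m" using nk by simp
    ultimately show ?thesis using set_Apmf by blast
  qed
  have integrand: "(case y of (S, c) \<Rightarrow> tv_dist (group m n \<mu> c) (replicate_pmf n (D_goal m n \<mu> c)))
      = tv_dist (C.grp n k (snd y)) (replicate_pmf n (C.gl k (snd y)))" if y: "y \<in> set_pmf G" for y
  proof -
    obtain S c where yc: "y = (S, c)" by (cases y)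
    have c: "c \<in> set_pmf (Apmf m \<mu> k)" "length c = k" using supp[OF y] yc by auto
    have grp_eq: "group m n \<mu> c = C.grp n k c"
    proof -
      have "group m n \<mu> c = map_pmf fst (cond_pmf G {p. snd p = c})"
        unfolding group_def c(2) gr ..
      also have "\<dots> = map_pmf fst (map_pmf (\<lambda>s. (s, c)) (C.grp n k c))"
        unfolding G_def C.condG'(1)[OF nk c(1)] ..
      also have "\<dots> = C.grp n k c" by (simp add: map_pmf_comp)
      finally show ?thesis .
    qed
    have goal_eq: "D_goal m n \<mu> c = C.gl k c"
      unfolding D_goal_def grp_eq by (rule C.goal_eq[OF n1 nk c(1)])
    show ?thesis using yc grp_eq goal_eq by simp
  qed
  define V where "V = measure_pmf.expectation (grouped m n k \<mu>)
        (\<lambda>(S, c). tv_dist (group m n \<mu> c) (replicate_pmf n (D_goal m n \<mu> c)))"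
  have V_eq: "V = (\<integral>y. tv_dist (C.grp n k (snd y)) (replicate_pmf n (C.gl k (snd y))) \<partial>G)"
    unfolding V_def gr by (rule integral_cong_AE) (use integrand in \<open>auto simp: AE_measure_pmf_iff\<close>)
  define Bd where "Bd = real n ^ 2 * ln (real d) / (2 * real kmax)"
  have Bd0: "0 \<le> Bd" unfolding Bd_def using lnd by simp
  have Vtau: "V \<le> (Bd + \<tau>^2) / (2*\<tau>)" if tau: "\<tau> > 0" for \<tau>
  proof -
    have "V \<le> ((C.h (n+k) - C.h k - real n * (C.h (Suc k) - C.h k)) / 2 + \<tau>^2) / (2*\<tau>)"
      unfolding V_eq G_def by (rule C.main_bound[OF n1 nk tau])
    also have "\<dots> \<le> (Bd + \<tau>^2) / (2*\<tau>)"
    proof -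
      have "(C.h (n+k) - C.h k - real n * (C.h (Suc k) - C.h k)) / 2 \<le> Bd"
        using gk unfolding Bd_def by (simp add: field_simps)
      then show ?thesis using tau by (intro divide_right_mono) auto
    qed
    finally show ?thesis .
  qed
  have "V \<le> sqrt Bd"
  proof (cases "Bd = 0")
    case False
    then have Bp: "Bd > 0" using Bd0 by simp
    have "V \<le> (Bd + (sqrt Bd)^2) / (2 * sqrt Bd)" using Vtau[of "sqrt Bd"] Bp by simp
    also have "\<dots> = sqrt Bd" using Bp by (simp add: field_simps)
    finally show ?thesis .
  next
    case True
    show ?thesis
    proof (rule ccontr)
      assume "\<not> V \<le> sqrt Bd"
      then have Vp: "V > 0" using True by simp
      have "V \<le> (Bd + V^2) / (2*V)" by (rule Vtau[OF Vp])
      also have "\<dots> = V / 2" using True Vp by (simp add: power2_eq_square)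
      finally show False using Vp by simp
    qed
  qed
  then show ?thesis using k unfolding V_def Bd_def by blast
qed



end
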